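(* Let $F$ be an absolutely continuous distribution with support $(\underline{\theta}, \overline{\theta})$, $0 \le \underline{\theta} < \overline{\theta} \le \infty$, with density $f$ continuous and strictly positive on the support. Consider two families of two-player games in which each player $i\in\{1,2\}$ has a private type $\theta_i$ drawn independently from $F$ and chooses a stopping time $a_i \in [0,\infty]$. (AL game with parameter $\delta \in [0,1)$): payoffs are $\theta_i - (\delta a_{-i} + (1-\delta) a_i)$ if $a_i > a_{-i}$, $\theta_i/2 - a_i$ if $a_i = a_{-i}$, and $-a_i$ if $a_i < a_{-i}$. (Behavioral-types game with parameter $\epsilon \in (0,1)$): independently across players, each player is "crazy" with probability $\epsilon$ and "normal" with probability $1-\epsilon$. Crazy types have payoffs $\theta_i$, $\theta_i/2$, $0$ in the three cases above (no costs) and always choose $a_i=\infty$; normal types have payoffs $\theta_i - a_{-i}$ if $a_i > a_{-i}$, $\theta_i/2 - a_i$ if $a_i = a_{-i}$, $-a_i$ if $a_i < a_{-i}$, so a normal type $\theta_i$ choosing $a_i$ has expected payoff $(1-\epsilon)\big[\theta_i G_{-i}(a_i) - \int_0^{a_i}(1-G_{-i}(s))\,ds\big] - \epsilon a_i$, where $G_{-i}$ is the CDF of the normal opponent's stopping time. For an equilibrium (with normal-type strategies $\sigma_1,\sigma_2$ in the behavioral-types game), with the convention that only Player 1 may concede at zero with positive probability, let $\underline{\theta}_1 := \sup\{\theta:\sigma_1(\theta)=0\}$ and define the type-to-type function $k(\theta) := \sigma_2^{-1}(\sigma_1(\theta))$ on the set of Player 1 types with $\sigma_1(\theta)\in(0,\infty)$.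 Let $\mathcal{E}(\delta)$ be the set of equilibrium type-to-type functions of the AL game with parameter $\delta$, and $\mathcal{E}^{BT}(\epsilon)$ the set of equilibrium type-to-type functions (of normal types) of the behavioral-types game with parameter $\epsilon$. Then: (i) In the behavioral-types game with parameter $\epsilon$, the type-to-type function $k_\epsilon$ satisfies $$\frac{\partial k_\epsilon(\theta,\underline{\theta}_1)}{\partial\theta} = \frac{1-(1-\epsilon)F(k_\epsilon(\theta,\underline{\theta}_1))}{1-(1-\epsilon)F(\theta)}\cdot\frac{k_\epsilon(\theta,\underline{\theta}_1)\,f(\theta)}{\theta\, f(k_\epsilon(\theta,\underline{\theta}_1))},$$ which with $\delta = 1-\epsilon$ is identical to the corresponding ODE for the AL game with parameter $\delta$; the associated perturbed hazard potential is $\Lambda_\delta(\theta) = \int_{\theta^\circ}^{\theta} \frac{f(x)}{x(1-\delta F(x))}\,dx$ (for a fixed reference point $\theta^\circ$ in the support) with $\delta = 1-\epsilon$. (ii) For every $\delta\in(0,1)$ there is a bijection between $\mathcal{E}(\delta)$ and $\mathcal{E}^{BT}(1-\delta)$ preserving the type-to-type function; i.e. $\mathcal{E}(\delta) = \mathcal{E}^{BT}(1-\delta)$. (iii) Consequently $\limsup_{\delta\to 1^-}\mathcal{E}(\delta) = \limsup_{\epsilon\to 0^+}\mathcal{E}^{BT}(\epsilon)$, where outer limits are taken in the topology of uniform convergence on compact subsets of $(\underline{\theta},\overline{\theta})$.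
   Context: Equilibria are Bayesian Nash equilibria in pure strategies. The outer limit $\limsup_{\delta\to1^-}\mathcal{E}(\delta)$ is the set of all limits (in the topology of uniform convergence on compact subsets) of sequences $k_n\in\mathcal{E}(\delta_n)$ with $\delta_n\to1^-$; it is called the Amann–Leininger selection, and $\limsup_{\epsilon\to0^+}\mathcal{E}^{BT}(\epsilon)$ the behavioral-types selection. *)

theory Defs
  imports "HOL-Probability.Probability"
begin

definition supp :: "real \<Rightarrow> ereal \<Rightarrow> real set" where
  "supp lo hi = {x. lo < x \<and> ereal x < hi}"

definition distF :: "real \<Rightarrow> ereal \<Rightarrow> (real \<Rightarrow> real) \<Rightarrow> real measure" where
  "distF lo hi f = density lborel (\<lambda>x. indicator (supp lo hi) x * ennreal (f x))"

definition cdfF :: "real \<Rightarrow> ereal \<Rightarrow> (real \<Rightarrow> real) \<Rightarrow> real \<Rightarrow> real" where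
  "cdfF lo hi f x = measure (distF lo hi f) {..x}"

text \<open>Winner (a > b) pays d*b + (1-d)*a, otherwise the cost is a;
  i.e. the cost is d * min a b + (1-d) * a.\<close>
definition EU_AL :: "real \<Rightarrow> ereal \<Rightarrow> (real \<Rightarrow> real) \<Rightarrow> real \<Rightarrow> (real \<Rightarrow> ennreal)
    \<Rightarrow> real \<Rightarrow> ennreal \<Rightarrow> ereal" where
  "EU_AL lo hi f d sig th a =
     ereal (th * measure (distF lo hi f) {x. sig x < a}
            + th / 2 * measure (distF lo hi f) {x. sig x = a})
     - enn2ereal (\<integral>\<^sup>+ x. (ennreal d * min a (sig x) + ennreal (1 - d) * a) \<partial>distF lo hi f)"

text \<open>Behavioural-types game with parameter e: expected payoff of a NORMAL type th choosing a,
  when the opponent is crazy (always plays infinity, no cost) with probability e and normal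
  with probability 1-e, the normal opponent using strategy sig.  Normal payoffs:
  th - b if a > b, th/2 - a if a = b, -a if a < b (cost min a b).\<close>
definition EU_BT :: "real \<Rightarrow> ereal \<Rightarrow> (real \<Rightarrow> real) \<Rightarrow> real \<Rightarrow> (real \<Rightarrow> ennreal)
    \<Rightarrow> real \<Rightarrow> ennreal \<Rightarrow> ereal" where
  "EU_BT lo hi f e sig th a =
     ereal ((1 - e) * (th * measure (distF lo hi f) {x. sig x < a}
                       + th / 2 * measure (distF lo hi f) {x. sig x = a})
            + (if a = \<infinity> then e * (th / 2) else 0))
     - enn2ereal (ennreal (1 - e) * (\<integral>\<^sup>+ x. min a (sig x) \<partial>distF lo hi f) + ennreal e * a)"

section \<open>Equilibria (pure-strategy Bayesian Nash, with the labelling convention that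
  Player 2 does not concede at zero with positive probability)\<close>

definition is_eq :: "real \<Rightarrow> ereal \<Rightarrow> (real \<Rightarrow> real)
    \<Rightarrow> ((real \<Rightarrow> ennreal) \<Rightarrow> real \<Rightarrow> ennreal \<Rightarrow> ereal)
    \<Rightarrow> (real \<Rightarrow> ennreal) \<Rightarrow> (real \<Rightarrow> ennreal) \<Rightarrow> bool" where
  "is_eq lo hi f EU s1 s2 \<longleftrightarrow>
     s1 \<in> borel_measurable borel \<and> s2 \<in> borel_measurable borel \<and>
     (\<forall>th\<in>supp lo hi. \<forall>a. EU s2 th a \<le> EU s2 th (s1 th)) \<and>
     (\<forall>th\<in>supp lo hi. \<forall>a. EU s1 th a \<le> EU s1 th (s2 th)) \<and>
     measure (distF lo hi f) {th. s2 th = 0} = 0"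

definition AL_eq :: "real \<Rightarrow> ereal \<Rightarrow> (real \<Rightarrow> real) \<Rightarrow> real
    \<Rightarrow> (real \<Rightarrow> ennreal) \<Rightarrow> (real \<Rightarrow> ennreal) \<Rightarrow> bool" where
  "AL_eq lo hi f d s1 s2 \<longleftrightarrow> is_eq lo hi f (EU_AL lo hi f d) s1 s2"

definition BT_eq :: "real \<Rightarrow> ereal \<Rightarrow> (real \<Rightarrow> real) \<Rightarrow> real
    \<Rightarrow> (real \<Rightarrow> ennreal) \<Rightarrow> (real \<Rightarrow> ennreal) \<Rightarrow> bool" where
  "BT_eq lo hi f e s1 s2 \<longleftrightarrow> is_eq lo hi f (EU_BT lo hi f e) s1 s2"

text \<open>Lower threshold: sup of Player 1 types conceding at 0 (as an extended real; -infinity if none).\<close>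
definition th1 :: "real \<Rightarrow> ereal \<Rightarrow> (real \<Rightarrow> ennreal) \<Rightarrow> ereal" where
  "th1 lo hi s1 = Sup (ereal ` {th \<in> supp lo hi. s1 th = 0})"

text \<open>k(th) = s2^{-1}(s1 th), via the generalised inverse inf {th'. s2 th' >= s1 th}
  (which equals the inverse wherever s2 is strictly increasing and continuous, and equals lo
  for types conceding at zero).\<close>
definition ttf :: "real \<Rightarrow> ereal \<Rightarrow> (real \<Rightarrow> ennreal) \<Rightarrow> (real \<Rightarrow> ennreal) \<Rightarrow> real \<Rightarrow> real" where
  "ttf lo hi s1 s2 th =
     (if th \<in> supp lo hi then Inf {th' \<in> supp lo hi. s1 th \<le> s2 th'} else 0)"

definition E_AL :: "real \<Rightarrow> ereal \<Rightarrow> (real \<Rightarrow> real) \<Rightarrow> real \<Rightarrow> (real \<Rightarrow> real) set" where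
  "E_AL lo hi f d = {ttf lo hi s1 s2 | s1 s2. AL_eq lo hi f d s1 s2}"

definition E_BT :: "real \<Rightarrow> ereal \<Rightarrow> (real \<Rightarrow> real) \<Rightarrow> real \<Rightarrow> (real \<Rightarrow> real) set" where
  "E_BT lo hi f e = {ttf lo hi s1 s2 | s1 s2. BT_eq lo hi f e s1 s2}"

definition ucc :: "real set \<Rightarrow> (nat \<Rightarrow> real \<Rightarrow> real) \<Rightarrow> (real \<Rightarrow> real) \<Rightarrow> bool" where
  "ucc S kn k \<longleftrightarrow> (\<forall>K. compact K \<and> K \<subseteq> S \<longrightarrow> uniform_limit K kn k sequentially)"

text \<open>Amann--Leininger selection: outer limit of E_AL(d) as d -> 1-.\<close>
definition AL_selection :: "real \<Rightarrow> ereal \<Rightarrow> (real \<Rightarrow> real) \<Rightarrow> (real \<Rightarrow> real) set" where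
  "AL_selection lo hi f = {k. \<exists>d kn. (\<forall>n. 0 \<le> d n \<and> d n < 1 \<and> kn n \<in> E_AL lo hi f (d n))
      \<and> d \<longlonglongrightarrow> 1 \<and> ucc (supp lo hi) kn k}"

text \<open>Behavioural-types selection: outer limit of E_BT(e) as e -> 0+.\<close>
definition BT_selection :: "real \<Rightarrow> ereal \<Rightarrow> (real \<Rightarrow> real) \<Rightarrow> (real \<Rightarrow> real) set" where
  "BT_selection lo hi f = {k. \<exists>e kn. (\<forall>n. 0 < e n \<and> e n < 1 \<and> kn n \<in> E_BT lo hi f (e n))
      \<and> e \<longlonglongrightarrow> 0 \<and> ucc (supp lo hi) kn k}"

definition ode_rhs :: "real \<Rightarrow> ereal \<Rightarrow> (real \<Rightarrow> real) \<Rightarrow> real \<Rightarrow> real \<Rightarrow> real \<Rightarrow> real" where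
  "ode_rhs lo hi f d th y =
     (1 - d * cdfF lo hi f y) / (1 - d * cdfF lo hi f th) * (y * f th) / (th * f y)"

definition Lambda :: "real \<Rightarrow> ereal \<Rightarrow> (real \<Rightarrow> real) \<Rightarrow> real \<Rightarrow> real \<Rightarrow> real \<Rightarrow> real" where
  "Lambda lo hi f d th0 th =
     (LBINT x=ereal th0..ereal th. f x / (x * (1 - d * cdfF lo hi f x)))"

end

theory Submission
  imports Defs
begin

locale setting =
  fixes lo :: real and hi :: ereal and f :: "real \<Rightarrow> real"
  assumes lo0: "0 \<le> lo" and lohi: "ereal lo < hi"
    and fcont: "continuous_on (supp lo hi) f"
    and fpos: "\<forall>x\<in>supp lo hi. 0 < f x"
    and prob: "prob_space (distF lo hi f)"
begin

abbreviation "S \<equiv> supp lo hi"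
abbreviation "M \<equiv> distF lo hi f"
abbreviation "F \<equiv> cdfF lo hi f"

sublocale P: prob_space M by (rule prob)

lemma S_iff: "x \<in> S \<longleftrightarrow> lo < x \<and> ereal x < hi"
  by (simp add: supp_def)

lemma S_open: "open S"
proof -
  have "S = {lo<..} \<inter> {x. ereal x < hi}" by (auto simp: supp_def)
  moreover have "open {x::real. ereal x < hi}"
  proof (cases hi)
    case (real r)
    then have "{x::real. ereal x < hi} = {..<r}" by auto
    then show ?thesis by simp
  next
    case PInf
    then have "{x::real. ereal x < hi} = UNIV" by auto
    then show ?thesis by simp
  next
    case MInf
    then have "{x::real. ereal x < hi} = {}" by auto
    then show ?thesis by simp
  qed
  ultimately show ?thesis by (metis open_Int open_greaterThan)
qed

lemma S_pos: "x \<in> S \<Longrightarrow> 0 < x" using lo0 by (auto simp: S_iff)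

lemma S_between: "x \<in> S \<Longrightarrow> z \<in> S \<Longrightarrow> x \<le> y \<Longrightarrow> y \<le> z \<Longrightarrow> y \<in> S"
proof -
  assume a: "x \<in> S" "z \<in> S" "x \<le> y" "y \<le> z"
  then have "lo < y" by (auto simp: S_iff)
  have e1: "ereal y \<le> ereal z" using a by simp
  have e2: "ereal z < hi" using a(2) by (simp add: S_iff)
  have "ereal y < hi" using e1 e2 by (rule le_less_trans)
  with \<open>lo < y\<close> show ?thesis by (simp add: S_iff)
qed

lemma S_above: "x \<in> S \<Longrightarrow> \<exists>z\<in>S. x < z"
proof -
  assume x: "x \<in> S"
  from S_open x obtain e where e: "e > 0" "ball x e \<subseteq> S" by (auto simp: open_contains_ball)
  then have "x + e/2 \<in> S" by (auto simp: dist_real_def)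
  then show ?thesis using e by (intro bexI[of _ "x + e/2"]) auto
qed

lemma S_below: "x \<in> S \<Longrightarrow> \<exists>z\<in>S. z < x"
proof -
  assume x: "x \<in> S"
  from S_open x obtain e where e: "e > 0" "ball x e \<subseteq> S" by (auto simp: open_contains_ball)
  then have "x - e/2 \<in> S" by (auto simp: dist_real_def)
  then show ?thesis using e by (intro bexI[of _ "x - e/2"]) auto
qed

lemma S_ne: "S \<noteq> {}"
proof (cases hi)
  case (real r)
  then have "(lo+r)/2 \<in> S" using lohi by (auto simp: supp_def)
  then show ?thesis by blast
next
  case PInf
  then have "lo+1 \<in> S" by (auto simp: supp_def)
  then show ?thesis by blast
next
  case MInf then show ?thesis using lohi by auto
qed

lemma sets_M[simp, measurable_cong]: "sets M = sets borel"
  by (simp add: distF_def)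

lemma space_M[simp]: "space M = UNIV"
  by (simp add: distF_def)

lemma dens_meas: "(\<lambda>x. indicator S x * ennreal (f x)) \<in> borel_measurable borel"
proof -
  have "(\<lambda>x. indicator S x *\<^sub>R f x) \<in> borel_measurable borel"
    by (rule borel_measurable_continuous_on_indicator[OF _ fcont]) (simp add: S_open borel_open)
  then have "(\<lambda>x. ennreal (indicator S x * f x)) \<in> borel_measurable borel" by simp
  moreover have "(\<lambda>x. ennreal (indicator S x * f x)) = (\<lambda>x. indicator S x * ennreal (f x))"
    by (auto simp: indicator_def)
  ultimately show ?thesis by simp
qed

lemma emeasure_M: "A \<in> sets borel \<Longrightarrow>
   emeasure M A = (\<integral>\<^sup>+ x. indicator S x * ennreal (f x) * indicator A x \<partial>lborel)"
  unfolding distF_def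
  using dens_meas by (subst emeasure_density) auto

lemma measure_cong_S:
  assumes "A \<in> sets borel" "B \<in> sets borel" "A \<inter> S = B \<inter> S"
  shows "measure M A = measure M B"
proof -
  have "emeasure M A = emeasure M B"
    using assms unfolding emeasure_M[OF assms(1)] emeasure_M[OF assms(2)]
    by (intro nn_integral_cong) (auto simp: indicator_def)
  then show ?thesis by (simp add: measure_def)
qed

lemma measure_out_S:
  assumes "A \<in> sets borel" "A \<inter> S = {}"
  shows "measure M A = 0"
  using measure_cong_S[OF assms(1), of "{}"] assms by auto

lemma measure_single: "measure M {c} = 0"
proof -
  have "AE x in lborel. indicator S x * ennreal (f x) * indicator {c} x = 0"
    using AE_lborel_singleton[of c] by eventually_elim simp
  then have "(\<integral>\<^sup>+ x. indicator S x * ennreal (f x) * indicator {c} x \<partial>lborel) = (\<integral>\<^sup>+ x. 0 \<partial>lborel)"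
    by (simp add: nn_integral_cong_AE)
  then have "emeasure M {c} = 0" by (simp add: emeasure_M)
  then show ?thesis by (simp add: measure_def)
qed

lemma measure_pos_S:
  assumes "A \<in> sets borel" "measure M A > 0"
  shows "\<exists>x\<in>S. x \<in> A"
  using measure_out_S[OF assms(1)] assms(2) by auto

lemma F_bounds: "0 \<le> F x" "F x \<le> 1"
  by (auto simp: cdfF_def)

lemma F_lt: "F x = measure M {..<x}"
proof -
  have "measure M {..x} = measure M {..<x} + measure M {x}"
    by (subst P.finite_measure_Union[symmetric]) (auto intro!: arg_cong[where f="measure M"])
  then show ?thesis by (simp add: cdfF_def measure_single)
qed

lemma F_integral:
  assumes "a \<in> S" "u \<in> S" "a \<le> u"
  shows "F u = F a + integral {a..u} f"
proof -
  have sub: "{a..u} \<subseteq> S" using S_between[OF assms(1,2)] by auto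
  have cont: "continuous_on {a..u} f" using fcont sub continuous_on_subset by blast
  have nn: "\<And>x. x \<in> {a..u} \<Longrightarrow> 0 \<le> f x"
  proof -
    fix x assume "x \<in> {a..u}"
    then have "x \<in> S" using sub by blast
    then show "0 \<le> f x" using fpos by (simp add: less_imp_le)
  qed
  have hi: "(f has_integral integral {a..u} f) {a..u}"
    using integrable_continuous_interval[OF cont] by (simp add: has_integral_integral)
  have "emeasure M {a<..u} = (\<integral>\<^sup>+ x. indicator S x * ennreal (f x) * indicator {a<..u} x \<partial>lborel)"
    by (rule emeasure_M) simp
  also have "\<dots> = (\<integral>\<^sup>+ x. ennreal (f x) * indicator {a..u} x \<partial>lborel)"
    apply (intro nn_integral_cong_AE)
    using AE_lborel_singleton[of a] apply eventually_elim
    using sub by (auto simp: indicator_def)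
  also have "\<dots> = ennreal (integral {a..u} f)"
    by (rule nn_integral_has_integral_lebesgue'[OF nn hi])
  finally have e: "measure M {a<..u} = integral {a..u} f"
    using integral_nonneg[OF integrable_continuous_interval[OF cont]] nn
    by (simp add: measure_def)
  have "measure M {..u} = measure M {..a} + measure M {a<..u}"
    using assms(3) by (subst P.finite_measure_Union[symmetric]) (auto intro!: arg_cong[where f="measure M"])
  then show ?thesis using e by (simp add: cdfF_def)
qed

lemma S_nbhd:
  assumes "x \<in> S" obtains a b where "a \<in> S" "b \<in> S" "a < x" "x < b" "{a..b} \<subseteq> S"
  using S_below[OF assms] S_above[OF assms] S_between by (meson atLeastAtMost_iff subsetI)

lemma F_deriv:
  assumes x: "x \<in> S" shows "(F has_real_derivative f x) (at x)"
proof -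
  obtain a b where ab: "a \<in> S" "b \<in> S" "a < x" "x < b" "{a..b} \<subseteq> S" using S_nbhd[OF x] .
  have cont: "continuous_on {a..b} f" using fcont ab(5) continuous_on_subset by blast
  have "((\<lambda>u. integral {a..u} f) has_real_derivative f x) (at x within {a..b})"
    by (rule integral_has_real_derivative[OF cont]) (use ab in auto)
  then have "((\<lambda>u. integral {a..u} f) has_real_derivative f x) (at x)"
    using at_within_Icc_at[OF ab(3,4)] by simp
  then have d: "((\<lambda>u. F a + integral {a..u} f) has_real_derivative f x) (at x)"
    using DERIV_add[OF DERIV_const] by fastforce
  show ?thesis
  proof (rule has_field_derivative_transform_within_open[OF d, of "{a<..<b}"])
    fix u assume "u \<in> {a<..<b}"
    then show "F a + integral {a..u} f = F u"
      using F_integral[of a u] ab S_between[of a b u] by auto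
  qed (use ab in auto)
qed

lemma F_cont: "x \<in> S \<Longrightarrow> isCont F x"
  using F_deriv DERIV_isCont by blast

lemma F_strict: "x \<in> S \<Longrightarrow> y \<in> S \<Longrightarrow> x < y \<Longrightarrow> F x < F y"
  apply (rule DERIV_pos_imp_increasing, assumption)
  subgoal for z using F_deriv[of z] fpos S_between[of x y z] by auto
  done

lemma F_mono: "x \<in> S \<Longrightarrow> y \<in> S \<Longrightarrow> x \<le> y \<Longrightarrow> F x \<le> F y"
  using F_strict by (cases "x = y") (auto intro: less_imp_le)

lemma F_le: "F x = measure M {..x}" by (simp add: cdfF_def)

end

locale game = setting +
  fixes d :: real
  assumes d0: "0 < d" and d1: "d < 1"
begin

end

context game begin

definition Plt :: "(real \<Rightarrow> real) \<Rightarrow> real \<Rightarrow> real" where "Plt \<rho> r = measure M {x. \<rho> x < r}"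
definition Ple :: "(real \<Rightarrow> real) \<Rightarrow> real \<Rightarrow> real" where "Ple \<rho> r = measure M {x. \<rho> x \<le> r}"
definition Peq :: "(real \<Rightarrow> real) \<Rightarrow> real \<Rightarrow> real" where "Peq \<rho> r = measure M {x. \<rho> x = r}"
definition W :: "(real \<Rightarrow> real) \<Rightarrow> real \<Rightarrow> real" where "W \<rho> r = Plt \<rho> r + Peq \<rho> r / 2"
definition Imn :: "(real \<Rightarrow> real) \<Rightarrow> real \<Rightarrow> real" where "Imn \<rho> r = (\<integral> x. min r (\<rho> x) \<partial>M)"
definition Cr :: "(real \<Rightarrow> real) \<Rightarrow> real \<Rightarrow> real" where "Cr \<rho> r = d * Imn \<rho> r + (1 - d) * r"
definition U :: "(real \<Rightarrow> real) \<Rightarrow> real \<Rightarrow> real \<Rightarrow> real" where "U \<rho> th r = th * W \<rho> r - Cr \<rho> r"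
definition strat :: "(real \<Rightarrow> real) \<Rightarrow> bool" where "strat \<rho> \<longleftrightarrow> \<rho> \<in> borel_measurable borel \<and> (\<forall>x. 0 \<le> \<rho> x)"
definition BR :: "(real \<Rightarrow> real) \<Rightarrow> (real \<Rightarrow> real) \<Rightarrow> bool" where
  "BR \<rho>' \<rho> \<longleftrightarrow> (\<forall>th\<in>S. \<forall>r\<ge>0. U \<rho>' th r \<le> U \<rho>' th (\<rho> th))"

lemma Ple_split: "\<rho> \<in> borel_measurable borel \<Longrightarrow> Ple \<rho> r = Plt \<rho> r + Peq \<rho> r"
  unfolding Ple_def Plt_def Peq_def
  by (subst P.finite_measure_Union[symmetric]) (auto intro!: arg_cong[where f="measure M"])

lemma W_bounds:
  assumes "\<rho> \<in> borel_measurable borel"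
  shows "Plt \<rho> r \<le> W \<rho> r" "W \<rho> r \<le> Ple \<rho> r"
  using Ple_split[OF assms, of r] by (auto simp: W_def Peq_def)

lemma Ple_Plt:
  assumes [measurable]: "\<rho> \<in> borel_measurable borel" and "r' < r"
  shows "Ple \<rho> r' \<le> Plt \<rho> r"
  unfolding Ple_def Plt_def using assms(2)
  by (intro P.finite_measure_mono) (auto, measurable)

lemma W_mono:
  assumes "\<rho> \<in> borel_measurable borel" "r' \<le> r"
  shows "W \<rho> r' \<le> W \<rho> r"
proof (cases "r' = r")
  case False
  then have "r' < r" using assms(2) by simp
  then show ?thesis using W_bounds[OF assms(1), of r'] W_bounds[OF assms(1), of r] Ple_Plt[OF assms(1) \<open>r' < r\<close>]
    by linarith
qed simp

lemma W_diff:
  assumes [measurable]: "\<rho> \<in> borel_measurable borel" and "r' \<le> r"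
  shows "W \<rho> r - W \<rho> r' \<le> measure M {x. r' \<le> \<rho> x \<and> \<rho> x \<le> r}"
proof -
  have "measure M {x. \<rho> x \<le> r} = measure M {x. \<rho> x < r'} + measure M {x. r' \<le> \<rho> x \<and> \<rho> x \<le> r}"
    using assms(2) by (subst P.finite_measure_Union[symmetric]) (auto intro!: arg_cong[where f="measure M"])
  then show ?thesis using W_bounds[OF assms(1), of r] W_bounds[OF assms(1), of r']
    by (simp add: Ple_def Plt_def)
qed

lemma integrable_min:
  fixes \<rho> :: "real \<Rightarrow> real" and r :: real
  assumes [measurable]: "\<rho> \<in> borel_measurable borel" and "\<forall>x. 0 \<le> \<rho> x" "0 \<le> r"
  shows "integrable M (\<lambda>x. min r (\<rho> x))"
proof -
  have "AE x in M. norm (min r (\<rho> x)) \<le> r" using assms by auto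
  then show ?thesis by (rule P.integrable_const_bound) measurable
qed

lemma integrable_bdd:
  fixes g :: "real \<Rightarrow> real" and B :: real
  assumes [measurable]: "g \<in> borel_measurable borel" and "\<And>x. \<bar>g x\<bar> \<le> B"
  shows "integrable M g"
proof -
  have "AE x in M. norm (g x) \<le> B" using assms by auto
  then show ?thesis by (rule P.integrable_const_bound) measurable
qed

lemma Imn_diff:
  assumes st: "strat \<rho>" and r: "0 \<le> r'" "r' \<le> r"
  shows "(r - r') * (1 - Plt \<rho> r) \<le> Imn \<rho> r - Imn \<rho> r'"
    and "Imn \<rho> r - Imn \<rho> r' \<le> (r - r') * (1 - Ple \<rho> r')"
proof -
  have [measurable]: "\<rho> \<in> borel_measurable borel" and nn: "\<forall>x. 0 \<le> \<rho> x" using st by (auto simp: strat_def)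
  have i1: "integrable M (\<lambda>x. min r (\<rho> x))" and i2: "integrable M (\<lambda>x. min r' (\<rho> x))"
    using integrable_min[OF _ nn] r by auto
  have eq: "Imn \<rho> r - Imn \<rho> r' = (\<integral> x. min r (\<rho> x) - min r' (\<rho> x) \<partial>M)"
    unfolding Imn_def by (rule Bochner_Integration.integral_diff[OF i1 i2, symmetric])
  have c1: "measure M {x. r \<le> \<rho> x} = 1 - Plt \<rho> r"
    unfolding Plt_def by (subst P.prob_compl[symmetric]) (auto intro!: arg_cong[where f="measure M"])
  have c2: "measure M {x. r' < \<rho> x} = 1 - Ple \<rho> r'"
    unfolding Ple_def by (subst P.prob_compl[symmetric]) (auto intro!: arg_cong[where f="measure M"])
  have ii1: "integrable M (\<lambda>x. (r - r') * indicator {x. r \<le> \<rho> x} x)"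
    by (rule integrable_bdd[where B="\<bar>r - r'\<bar>"]) (auto simp: indicator_def)
  have ii2: "integrable M (\<lambda>x. (r - r') * indicator {x. r' < \<rho> x} x)"
    by (rule integrable_bdd[where B="\<bar>r - r'\<bar>"]) (auto simp: indicator_def)
  have v1: "(\<integral> x. (r - r') * indicator {x. r \<le> \<rho> x} x \<partial>M) = (r - r') * measure M {x. r \<le> \<rho> x}"
    by simp
  have v2: "(\<integral> x. (r - r') * indicator {x. r' < \<rho> x} x \<partial>M) = (r - r') * measure M {x. r' < \<rho> x}"
    by simp
  have "(\<integral> x. (r - r') * indicator {x. r \<le> \<rho> x} x \<partial>M) \<le> (\<integral> x. min r (\<rho> x) - min r' (\<rho> x) \<partial>M)"
    by (intro integral_mono Bochner_Integration.integrable_diff i1 i2 ii1) (use r in \<open>auto simp: indicator_def\<close>)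
  then show "(r - r') * (1 - Plt \<rho> r) \<le> Imn \<rho> r - Imn \<rho> r'"
    using c1 eq v1 by simp
  have "(\<integral> x. min r (\<rho> x) - min r' (\<rho> x) \<partial>M) \<le> (\<integral> x. (r - r') * indicator {x. r' < \<rho> x} x \<partial>M)"
    by (intro integral_mono Bochner_Integration.integrable_diff i1 i2 ii2) (use r in \<open>auto simp: indicator_def\<close>)
  then show "Imn \<rho> r - Imn \<rho> r' \<le> (r - r') * (1 - Ple \<rho> r')"
    using c2 eq v2 by simp
qed

lemma Cr_diff:
  assumes st: "strat \<rho>" and r: "0 \<le> r'" "r' \<le> r"
  shows "(r - r') * (1 - d * Plt \<rho> r) \<le> Cr \<rho> r - Cr \<rho> r'"
    and "Cr \<rho> r - Cr \<rho> r' \<le> (r - r') * (1 - d * Ple \<rho> r')"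
proof -
  have "d * ((r - r') * (1 - Plt \<rho> r)) \<le> d * (Imn \<rho> r - Imn \<rho> r')"
    using Imn_diff(1)[OF assms] d0 by (intro mult_left_mono) auto
  then show "(r - r') * (1 - d * Plt \<rho> r) \<le> Cr \<rho> r - Cr \<rho> r'"
    unfolding Cr_def by (simp add: algebra_simps)
  have "d * (Imn \<rho> r - Imn \<rho> r') \<le> d * ((r - r') * (1 - Ple \<rho> r'))"
    using Imn_diff(2)[OF assms] d0 by (intro mult_left_mono) auto
  then show "Cr \<rho> r - Cr \<rho> r' \<le> (r - r') * (1 - d * Ple \<rho> r')"
    unfolding Cr_def by (simp add: algebra_simps)
qed

lemma Cr_diff2:
  assumes st: "strat \<rho>" and r: "0 \<le> r'" "r' \<le> r"
  shows "(1 - d) * (r - r') \<le> Cr \<rho> r - Cr \<rho> r'" and "Cr \<rho> r - Cr \<rho> r' \<le> r - r'"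
proof -
  have p: "Plt \<rho> r \<le> 1" "0 \<le> Ple \<rho> r'" by (auto simp: Plt_def Ple_def)
  have nn: "0 \<le> d * (r - r')" using r d0 by simp
  have "d * (r - r') * Plt \<rho> r \<le> d * (r - r') * 1" by (rule mult_left_mono[OF p(1) nn])
  moreover have "d * (r - r') * 0 \<le> d * (r - r') * Ple \<rho> r'" by (rule mult_left_mono[OF p(2) nn])
  ultimately have "(1 - d) * (r - r') \<le> (r - r') * (1 - d * Plt \<rho> r)"
    "(r - r') * (1 - d * Ple \<rho> r') \<le> r - r'"
    by (simp_all add: algebra_simps)
  then show "(1 - d) * (r - r') \<le> Cr \<rho> r - Cr \<rho> r'" "Cr \<rho> r - Cr \<rho> r' \<le> r - r'"
    using Cr_diff[OF assms] by linarith+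
qed

end

context game begin

lemma strat_meas: "strat \<rho> \<Longrightarrow> \<rho> \<in> borel_measurable borel"
  unfolding strat_def by blast

lemma strat_nn: "strat \<rho> \<Longrightarrow> 0 \<le> \<rho> x"
  unfolding strat_def by blast

lemma BR_ineq: "BR \<rho>' \<rho> \<Longrightarrow> th \<in> S \<Longrightarrow> 0 \<le> r \<Longrightarrow>
   th * W \<rho>' r - Cr \<rho>' r \<le> th * W \<rho>' (\<rho> th) - Cr \<rho>' (\<rho> th)"
  unfolding BR_def U_def by blast

lemma measure_Ioc: "measure M {a<..b} = F b - F a" if "a \<le> b"
proof -
  have "measure M {..b} = measure M {..a} + measure M {a<..b}"
    using that by (subst P.finite_measure_Union[symmetric]) (auto intro!: arg_cong[where f="measure M"])
  then show ?thesis by (simp add: cdfF_def)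
qed

lemma mono_BR:
  assumes st: "strat \<rho>'" "strat \<rho>" and br: "BR \<rho>' \<rho>"
    and th: "th \<in> S" "th' \<in> S" "th < th'"
  shows "\<rho> th \<le> \<rho> th'"
proof (rule ccontr)
  assume "\<not> \<rho> th \<le> \<rho> th'"
  then have lt: "\<rho> th' < \<rho> th" by simp
  define a where "a = \<rho> th"
  define a' where "a' = \<rho> th'"
  have a'0: "0 \<le> a'" using strat_nn[OF st(2)] by (simp add: a'_def)
  have aa: "a' < a" using lt by (simp add: a_def a'_def)
  have i1: "th * W \<rho>' a' - Cr \<rho>' a' \<le> th * W \<rho>' a - Cr \<rho>' a"
    using BR_ineq[OF br th(1), of a'] a'0 by (simp add: a_def)
  have i2: "th' * W \<rho>' a - Cr \<rho>' a \<le> th' * W \<rho>' a' - Cr \<rho>' a'"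
    using BR_ineq[OF br th(2), of a] a'0 aa by (simp add: a'_def)
  have wm: "W \<rho>' a' \<le> W \<rho>' a" using W_mono[OF strat_meas[OF st(1)]] aa by simp
  have "(th' - th) * (W \<rho>' a - W \<rho>' a') \<le> 0" using i1 i2 by (simp add: algebra_simps)
  moreover have "0 < th' - th" using th by simp
  ultimately have "W \<rho>' a - W \<rho>' a' \<le> 0" by (simp add: mult_le_0_iff)
  then have "W \<rho>' a = W \<rho>' a'" using wm by simp
  then have "Cr \<rho>' a - Cr \<rho>' a' \<le> 0" using i1 by simp
  moreover have "(1 - d) * (a - a') \<le> Cr \<rho>' a - Cr \<rho>' a'"
    using Cr_diff2(1)[OF st(1) a'0] aa by simp
  moreover have "0 < (1 - d) * (a - a')" using aa d1 by simp
  ultimately show False by linarith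
qed

lemma left_mass:
  assumes st: "strat \<rho>'" "strat \<rho>" and br: "BR \<rho>' \<rho>"
    and th: "th \<in> S" and r: "0 \<le> r" "r < \<rho> th"
  shows "(1 - d) * (\<rho> th - r) \<le> th * measure M {x. r \<le> \<rho>' x \<and> \<rho>' x \<le> \<rho> th}"
    and "0 < measure M {x. r \<le> \<rho>' x \<and> \<rho>' x \<le> \<rho> th}"
proof -
  have i: "th * W \<rho>' r - Cr \<rho>' r \<le> th * W \<rho>' (\<rho> th) - Cr \<rho>' (\<rho> th)"
    using BR_ineq[OF br th r(1)] .
  have c: "(1 - d) * (\<rho> th - r) \<le> Cr \<rho>' (\<rho> th) - Cr \<rho>' r"
    using Cr_diff2(1)[OF st(1) r(1)] r(2) by simp
  have w: "W \<rho>' (\<rho> th) - W \<rho>' r \<le> measure M {x. r \<le> \<rho>' x \<and> \<rho>' x \<le> \<rho> th}"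
    using W_diff[OF strat_meas[OF st(1)]] r(2) by simp
  have tp: "0 < th" using S_pos[OF th] .
  have "th * (W \<rho>' (\<rho> th) - W \<rho>' r) \<le> th * measure M {x. r \<le> \<rho>' x \<and> \<rho>' x \<le> \<rho> th}"
    using w tp by (intro mult_left_mono) auto
  then show *: "(1 - d) * (\<rho> th - r) \<le> th * measure M {x. r \<le> \<rho>' x \<and> \<rho>' x \<le> \<rho> th}"
    using i c by (simp add: algebra_simps)
  have "0 < (1 - d) * (\<rho> th - r)" using d1 r by simp
  then have "0 < th * measure M {x. r \<le> \<rho>' x \<and> \<rho>' x \<le> \<rho> th}" using * by linarith
  then show "0 < measure M {x. r \<le> \<rho>' x \<and> \<rho>' x \<le> \<rho> th}" using tp by (simp add: zero_less_mult_iff)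
qed

lemma left_mass_ex:
  assumes st: "strat \<rho>'" "strat \<rho>" and br: "BR \<rho>' \<rho>"
    and th: "th \<in> S" and r: "0 \<le> r" "r < \<rho> th"
  shows "\<exists>y\<in>S. r \<le> \<rho>' y \<and> \<rho>' y \<le> \<rho> th"
proof -
  note [measurable] = strat_meas[OF st(1)]
  have "{x. r \<le> \<rho>' x \<and> \<rho>' x \<le> \<rho> th} \<in> sets borel" by measurable
  then show ?thesis using measure_pos_S left_mass(2)[OF assms] by blast
qed

lemma atom_bound:
  assumes st: "strat \<rho>'" "strat \<rho>" and br: "BR \<rho> \<rho>'"
    and y: "y \<in> S" and h: "0 < h" "a - h \<le> \<rho>' y" "\<rho>' y \<le> a"
  shows "y * Peq \<rho> a \<le> 4 * h"
proof -
  define b where "b = \<rho>' y"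
  have b0: "0 \<le> b" using strat_nn[OF st(1)] by (simp add: b_def)
  have i: "y * W \<rho> (a + h) - Cr \<rho> (a + h) \<le> y * W \<rho> b - Cr \<rho> b"
    using BR_ineq[OF br y, of "a + h"] b0 h by (simp add: b_def)
  have c: "Cr \<rho> (a + h) - Cr \<rho> b \<le> (a + h) - b"
    using Cr_diff2(2)[OF st(2) b0, of "a + h"] h by (simp add: b_def)
  have meas: "\<rho> \<in> borel_measurable borel" using strat_meas[OF st(2)] .
  have w1: "Plt \<rho> a + Peq \<rho> a \<le> W \<rho> (a + h)"
    using Ple_split[OF meas, of a] Ple_Plt[OF meas, of a "a + h"] W_bounds[OF meas, of "a + h"] h by simp
  have w2: "W \<rho> b \<le> Plt \<rho> a + Peq \<rho> a / 2"
  proof (cases "b = a")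
    case True then show ?thesis by (simp add: W_def)
  next
    case False
    then have "b < a" using h by (simp add: b_def)
    then have "W \<rho> b \<le> Plt \<rho> a"
      using W_bounds(2)[OF meas, of b] Ple_Plt[OF meas, of b a] by simp
    moreover have "0 \<le> Peq \<rho> a" by (simp add: Peq_def)
    ultimately show ?thesis by simp
  qed
  have yp: "0 < y" using S_pos[OF y] .
  have "y * (Peq \<rho> a / 2) \<le> y * (W \<rho> (a + h) - W \<rho> b)"
    using w1 w2 yp by (intro mult_left_mono) auto
  also have "\<dots> \<le> (a + h) - b" using i c by (simp add: algebra_simps)
  also have "\<dots> \<le> 2 * h" using h by (simp add: b_def)
  finally show ?thesis by simp
qed

lemma no_atom:
  assumes st: "strat \<rho>'" "strat \<rho>" and br: "BR \<rho>' \<rho>" "BR \<rho> \<rho>'"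
    and a: "0 < a"
  shows "Peq \<rho> a = 0"
proof (rule ccontr)
  assume "Peq \<rho> a \<noteq> 0"
  then have m: "0 < Peq \<rho> a" using measure_nonneg[of M "{x. \<rho> x = a}"] unfolding Peq_def by linarith
  define m where "m = Peq \<rho> a"
  have mp: "0 < m" using m by (simp add: m_def)
  note [measurable] = strat_meas[OF st(2)]
  have "{x. \<rho> x = a} \<in> sets borel" by measurable
  then obtain th' where th': "th' \<in> S" "\<rho> th' = a" using measure_pos_S m unfolding Peq_def by blast
  have A: "\<exists>y\<in>S. a - h \<le> \<rho>' y \<and> \<rho>' y \<le> a" if "0 < h" "h \<le> a" for h
    using left_mass_ex[OF st br(1) th'(1), of "a - h"] that th'(2) by simp
  have B: "y * m \<le> 4 * h" if "y \<in> S" "0 < h" "a - h \<le> \<rho>' y" "\<rho>' y \<le> a" for y h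
    using atom_bound[OF st br(2) that] by (simp add: m_def)
  obtain y where y: "y \<in> S" "a - a \<le> \<rho>' y" "\<rho>' y \<le> a" using A[of a] a by auto
  have yp: "0 < y" using S_pos[OF y(1)] .
  have ya: "\<rho>' y = a"
  proof (rule ccontr)
    assume "\<rho>' y \<noteq> a"
    then have lt: "\<rho>' y < a" using y by simp
    define h where "h = min ((a - \<rho>' y) / 2) (y * m / 8)"
    have hp: "0 < h" using lt yp mp by (simp add: h_def)
    have h1: "h \<le> (a - \<rho>' y) / 2" unfolding h_def by (rule min.cobounded1)
    have h2: "h \<le> y * m / 8" unfolding h_def by (rule min.cobounded2)
    have "(a - \<rho>' y) / 2 \<le> a" using strat_nn[OF st(1), of y] a by simp
    then have ha: "h \<le> a" unfolding h_def by (rule min.coboundedI1)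
    obtain y' where y': "y' \<in> S" "a - h \<le> \<rho>' y'" "\<rho>' y' \<le> a" using A[OF hp ha] by blast
    have "y' * m \<le> 4 * h" using B[OF y' (1) hp y'(2,3)] .
    also have "\<dots> \<le> 4 * (y * m / 8)" using h2 by linarith
    also have "\<dots> < y * m" using yp mp by simp
    finally have "y' < y" using mp by simp
    then have m1: "\<rho>' y' \<le> \<rho>' y" using mono_BR[OF st(2) st(1) br(2) y'(1) y(1)] by simp
    have "2 * h \<le> a - \<rho>' y" using h1 by simp
    then have "\<rho>' y < a - h" using hp by linarith
    with m1 show False using y'(2) by simp
  qed
  define h where "h = min a (y * m / 8)"
  have hp: "0 < h" using a yp mp by (simp add: h_def)
  have "y * m \<le> 4 * h" using B[OF y(1) hp] ya hp by simp
  also have "\<dots> \<le> y * m / 2" by (simp add: h_def)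
  finally show False using yp mp by simp
qed

lemma pool_mass:
  assumes st: "strat \<rho>'" "strat \<rho>" and br: "BR \<rho>' \<rho>"
    and th: "th \<in> S" "th' \<in> S" "th < th'" and eq: "\<rho> th = \<rho> th'"
  shows "F th' - F th \<le> Peq \<rho> (\<rho> th)"
proof -
  have sub: "{th<..th'} \<subseteq> S" using S_between[OF th(1,2)] by auto
  have "\<forall>x\<in>{th<..th'}. \<rho> x = \<rho> th"
  proof
    fix x assume x: "x \<in> {th<..th'}"
    then have xS: "x \<in> S" using sub by blast
    have "\<rho> th \<le> \<rho> x" using mono_BR[OF st br th(1) xS] x by simp
    moreover have "\<rho> x \<le> \<rho> th'"
      using mono_BR[OF st br xS th(2)] x by (cases "x = th'") auto
    ultimately show "\<rho> x = \<rho> th" using eq by simp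
  qed
  then have ss: "{th<..th'} \<subseteq> {x. \<rho> x = \<rho> th}" by auto
  note [measurable] = strat_meas[OF st(2)]
  have "measure M {th<..th'} \<le> measure M {x. \<rho> x = \<rho> th}"
    using ss by (intro P.finite_measure_mono) (auto, measurable)
  then show ?thesis using measure_Ioc[of th th'] th by (simp add: Peq_def)
qed

lemma F_gap: "th \<in> S \<Longrightarrow> th' \<in> S \<Longrightarrow> th < th' \<Longrightarrow> 0 < F th' - F th"
  using F_strict by simp

lemma strict_BR:
  assumes st: "strat \<rho>'" "strat \<rho>" and br: "BR \<rho>' \<rho>" "BR \<rho> \<rho>'"
    and th: "th \<in> S" "th' \<in> S" "th < th'" and pos: "0 < \<rho> th'"
  shows "\<rho> th < \<rho> th'"
proof (rule ccontr)
  assume "\<not> \<rho> th < \<rho> th'"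
  then have eq: "\<rho> th = \<rho> th'" using mono_BR[OF st br(1) th] by simp
  have "F th' - F th \<le> Peq \<rho> (\<rho> th)" using pool_mass[OF st br(1) th eq] .
  moreover have "Peq \<rho> (\<rho> th) = 0" using no_atom[OF st br, of "\<rho> th"] pos eq by simp
  ultimately show False using F_gap[OF th] by simp
qed

end

locale eqm = game +
  fixes \<rho>1 \<rho>2 :: "real \<Rightarrow> real"
  assumes st1: "strat \<rho>1" and st2: "strat \<rho>2"
    and br1: "BR \<rho>2 \<rho>1" and br2: "BR \<rho>1 \<rho>2"
    and z2: "measure M {x. \<rho>2 x = 0} = 0"
begin

lemma meas1[measurable]: "\<rho>1 \<in> borel_measurable borel" using strat_meas[OF st1] .
lemma meas2[measurable]: "\<rho>2 \<in> borel_measurable borel" using strat_meas[OF st2] .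
lemma nn1: "0 \<le> \<rho>1 x" using strat_nn[OF st1] .
lemma nn2: "0 \<le> \<rho>2 x" using strat_nn[OF st2] .

lemma mono1: "x \<in> S \<Longrightarrow> x' \<in> S \<Longrightarrow> x \<le> x' \<Longrightarrow> \<rho>1 x \<le> \<rho>1 x'"
  using mono_BR[OF st2 st1 br1, of x x'] by (cases "x = x'") auto

lemma mono2: "x \<in> S \<Longrightarrow> x' \<in> S \<Longrightarrow> x \<le> x' \<Longrightarrow> \<rho>2 x \<le> \<rho>2 x'"
  using mono_BR[OF st1 st2 br2, of x x'] by (cases "x = x'") auto

lemma strict1: "x \<in> S \<Longrightarrow> x' \<in> S \<Longrightarrow> x < x' \<Longrightarrow> 0 < \<rho>1 x' \<Longrightarrow> \<rho>1 x < \<rho>1 x'"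
  using strict_BR[OF st2 st1 br1 br2] by blast

lemma noatom2: "Peq \<rho>2 t = 0"
proof -
  consider "t < 0" | "t = 0" | "0 < t" by linarith
  then show ?thesis
  proof cases
    case 1
    then have "{x. \<rho>2 x = t} = {}" using nn2 by (auto simp: not_le[symmetric])
    then show ?thesis by (simp add: Peq_def)
  next
    case 2 then show ?thesis using z2 by (simp add: Peq_def)
  next
    case 3 then show ?thesis using no_atom[OF st1 st2 br2 br1] by simp
  qed
qed

lemma noatom1: "0 < t \<Longrightarrow> Peq \<rho>1 t = 0"
  using no_atom[OF st2 st1 br1 br2] by simp

lemma strict2:
  assumes y: "y \<in> S" "y' \<in> S" "y < y'"
  shows "\<rho>2 y < \<rho>2 y'"
proof (cases "0 < \<rho>2 y'")
  case True then show ?thesis using strict_BR[OF st1 st2 br2 br1 y] by blast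
next
  case False
  then have "\<rho>2 y' = 0" using nn2[of y'] by simp
  moreover have "\<rho>2 y \<le> \<rho>2 y'" using mono2[OF y(1,2)] y(3) by simp
  ultimately have eq: "\<rho>2 y = \<rho>2 y'" using nn2[of y] by simp
  have "F y' - F y \<le> Peq \<rho>2 (\<rho>2 y)" using pool_mass[OF st1 st2 br2 y eq] .
  then show ?thesis using noatom2 F_gap[OF y] by simp
qed

lemma strict2_iff: "y \<in> S \<Longrightarrow> y' \<in> S \<Longrightarrow> \<rho>2 y < \<rho>2 y' \<longleftrightarrow> y < y'"
  using strict2 by (metis linorder_neqE_linordered_idom order_less_asym order_less_irrefl)

lemma strict2_le_iff: "y \<in> S \<Longrightarrow> y' \<in> S \<Longrightarrow> \<rho>2 y \<le> \<rho>2 y' \<longleftrightarrow> y \<le> y'"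
  using strict2_iff by (meson not_le)

lemma Plt2: "y \<in> S \<Longrightarrow> Plt \<rho>2 (\<rho>2 y) = F y"
proof -
  assume y: "y \<in> S"
  have "{x. \<rho>2 x < \<rho>2 y} \<inter> S = {..<y} \<inter> S" using strict2_iff[OF _ y] by auto
  then have "measure M {x. \<rho>2 x < \<rho>2 y} = measure M {..<y}" by (intro measure_cong_S) auto
  then show ?thesis by (simp add: Plt_def F_lt)
qed

lemma Ple2: "y \<in> S \<Longrightarrow> Ple \<rho>2 (\<rho>2 y) = F y"
proof -
  assume y: "y \<in> S"
  have "{x. \<rho>2 x \<le> \<rho>2 y} \<inter> S = {..y} \<inter> S" using strict2_le_iff[OF _ y] by auto
  then have "measure M {x. \<rho>2 x \<le> \<rho>2 y} = measure M {..y}" by (intro measure_cong_S) auto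
  then show ?thesis by (simp add: Ple_def F_le)
qed

lemma W2: "y \<in> S \<Longrightarrow> W \<rho>2 (\<rho>2 y) = F y"
  using Plt2 noatom2 by (simp add: W_def)

lemma strict1_iff: "x \<in> S \<Longrightarrow> th \<in> S \<Longrightarrow> 0 < \<rho>1 th \<Longrightarrow> \<rho>1 x < \<rho>1 th \<longleftrightarrow> x < th"
proof -
  assume a: "x \<in> S" "th \<in> S" "0 < \<rho>1 th"
  show ?thesis
  proof
    assume "\<rho>1 x < \<rho>1 th"
    then show "x < th" using mono1[OF a(2,1)] by (meson not_le)
  qed (use strict1 a in blast)
qed

lemma strict1_le_iff: "x \<in> S \<Longrightarrow> th \<in> S \<Longrightarrow> 0 < \<rho>1 th \<Longrightarrow> \<rho>1 x \<le> \<rho>1 th \<longleftrightarrow> x \<le> th"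
proof -
  assume a: "x \<in> S" "th \<in> S" "0 < \<rho>1 th"
  show ?thesis
  proof
    assume "\<rho>1 x \<le> \<rho>1 th"
    show "x \<le> th"
    proof (rule ccontr)
      assume "\<not> x \<le> th"
      then have "th < x" by simp
      moreover have "0 < \<rho>1 x" using mono1[OF a(2,1)] \<open>th < x\<close> a(3) by simp
      ultimately have "\<rho>1 th < \<rho>1 x" using strict1 a by blast
      then show False using \<open>\<rho>1 x \<le> \<rho>1 th\<close> by simp
    qed
  qed (use mono1 a in blast)
qed

lemma Plt1: "th \<in> S \<Longrightarrow> 0 < \<rho>1 th \<Longrightarrow> Plt \<rho>1 (\<rho>1 th) = F th"
proof -
  assume y: "th \<in> S" "0 < \<rho>1 th"
  have "{x. \<rho>1 x < \<rho>1 th} \<inter> S = {..<th} \<inter> S" using strict1_iff[OF _ y] by auto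
  then have "measure M {x. \<rho>1 x < \<rho>1 th} = measure M {..<th}" by (intro measure_cong_S) auto
  then show ?thesis by (simp add: Plt_def F_lt)
qed

lemma Ple1: "th \<in> S \<Longrightarrow> 0 < \<rho>1 th \<Longrightarrow> Ple \<rho>1 (\<rho>1 th) = F th"
proof -
  assume y: "th \<in> S" "0 < \<rho>1 th"
  have "{x. \<rho>1 x \<le> \<rho>1 th} \<inter> S = {..th} \<inter> S" using strict1_le_iff[OF _ y] by auto
  then have "measure M {x. \<rho>1 x \<le> \<rho>1 th} = measure M {..th}" by (intro measure_cong_S) auto
  then show ?thesis by (simp add: Ple_def F_le)
qed

lemma W1: "th \<in> S \<Longrightarrow> 0 < \<rho>1 th \<Longrightarrow> W \<rho>1 (\<rho>1 th) = F th"
  using Plt1 noatom1 by (simp add: W_def)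

end

context eqm begin

lemma match:
  assumes th: "th \<in> S" and pos: "0 < \<rho>1 th"
  shows "\<exists>y\<in>S. \<rho>2 y = \<rho>1 th"
proof (rule ccontr)
  assume nm: "\<not> (\<exists>y\<in>S. \<rho>2 y = \<rho>1 th)"
  define t where "t = \<rho>1 th"
  have tp: "0 < t" using pos by (simp add: t_def)
  have ne: "\<And>y. y \<in> S \<Longrightarrow> \<rho>2 y \<noteq> t" using nm by (auto simp: t_def)
  have Aex: "\<exists>y\<in>S. r \<le> \<rho>2 y \<and> \<rho>2 y < t" if rr: "0 \<le> r" "r < t" for r
  proof -
    obtain y where "y \<in> S" "r \<le> \<rho>2 y" "\<rho>2 y \<le> t"
      using left_mass_ex[OF st2 st1 br1 th, of r] rr by (auto simp: t_def)
    then show ?thesis using ne by force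
  qed
  define B where "B = {y\<in>S. t < \<rho>2 y}"
  show False
  proof (cases "B = {}")
    case True
    then have all: "\<And>y. y \<in> S \<Longrightarrow> \<rho>2 y < t" using ne by (force simp: B_def)
    obtain th'' where th'': "th'' \<in> S" "th < th''" using S_above[OF th] by blast
    define t'' where "t'' = \<rho>1 th''"
    have "t \<le> t''" using mono1[OF th th''(1)] th'' by (simp add: t_def t''_def)
    then have "0 < t''" using tp by simp
    then have tt: "t < t''" using strict1[OF th th''] by (simp add: t_def t''_def)
    have "{x. \<rho>2 x < t} \<inter> S = UNIV \<inter> S" using all by auto
    then have "measure M {x. \<rho>2 x < t} = measure M UNIV" by (intro measure_cong_S) auto
    moreover have "measure M UNIV = 1" using P.prob_space space_M by metis
    ultimately have "Plt \<rho>2 t = 1" by (simp add: Plt_def)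
    then have w1: "1 \<le> W \<rho>2 t" using W_bounds(1)[OF meas2, of t] by simp
    have w2: "W \<rho>2 t'' \<le> 1" using W_bounds(2)[OF meas2, of t''] P.prob_le_1[of "{x. \<rho>2 x \<le> t''}"]
      unfolding Ple_def by linarith
    have i: "th'' * W \<rho>2 t - Cr \<rho>2 t \<le> th'' * W \<rho>2 t'' - Cr \<rho>2 t''"
      using BR_ineq[OF br1 th''(1), of t] tp by (simp add: t''_def)
    have "th'' * W \<rho>2 t'' \<le> th'' * W \<rho>2 t" using w1 w2 S_pos[OF th''(1)] by (intro mult_left_mono) auto
    then have "Cr \<rho>2 t'' - Cr \<rho>2 t \<le> 0" using i by simp
    moreover have "(1 - d) * (t'' - t) \<le> Cr \<rho>2 t'' - Cr \<rho>2 t" using Cr_diff2(1)[OF st2, of t t''] tp tt by simp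
    moreover have "0 < (1 - d) * (t'' - t)" using d1 tt by simp
    ultimately show False by linarith
  next
    case False
    obtain a where a: "a \<in> S" "\<rho>2 a < t" using Aex[of 0] tp by auto
    have ab: "\<And>z b. z \<in> S \<Longrightarrow> \<rho>2 z < t \<Longrightarrow> b \<in> B \<Longrightarrow> z < b"
    proof -
      fix z b assume z: "z \<in> S" "\<rho>2 z < t" and b: "b \<in> B"
      show "z < b"
      proof (rule ccontr)
        assume "\<not> z < b"
        then have "\<rho>2 b \<le> \<rho>2 z" using mono2[of b z] z b by (auto simp: B_def)
        then show False using z b by (auto simp: B_def)
      qed
    qed
    define y0 where "y0 = Inf B"
    have bdd: "bdd_below B" using ab[OF a] by (meson bdd_below.I less_imp_le)
    have y0b: "\<And>b. b \<in> B \<Longrightarrow> y0 \<le> b" unfolding y0_def using bdd by (simp add: cInf_lower)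
    have lower: "\<And>z. z \<in> S \<Longrightarrow> \<rho>2 z < t \<Longrightarrow> z \<le> y0"
      unfolding y0_def using False ab by (intro cInf_greatest) (auto intro: less_imp_le)
    obtain b0 where b0: "b0 \<in> B" using False by blast
    have y0S: "y0 \<in> S"
      using S_between[OF a(1), of b0 y0] lower[OF a] y0b[OF b0] b0 by (auto simp: B_def)
    have y0B: "t < \<rho>2 y0"
    proof (rule ccontr)
      assume "\<not> t < \<rho>2 y0"
      then have lt: "\<rho>2 y0 < t" using ne[OF y0S] by simp
      obtain y where y: "y \<in> S" "(\<rho>2 y0 + t) / 2 \<le> \<rho>2 y" "\<rho>2 y < t"
        using Aex[of "(\<rho>2 y0 + t) / 2"] lt nn2[of y0] by auto
      have "\<rho>2 y0 < \<rho>2 y" using y lt by simp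
      then have "y0 < y" using strict2_iff[OF y0S y(1)] by simp
      moreover have "y \<le> y0" using lower[OF y(1,3)] .
      ultimately show False by simp
    qed
    define b2 where "b2 = \<rho>2 y0"
    have below: "\<And>z. z \<in> S \<Longrightarrow> z < y0 \<Longrightarrow> \<rho>2 z < t"
    proof -
      fix z assume z: "z \<in> S" "z < y0"
      show "\<rho>2 z < t"
      proof (rule ccontr)
        assume "\<not> \<rho>2 z < t"
        then have "z \<in> B" using ne[OF z(1)] z(1) by (auto simp: B_def)
        then show False using y0b z(2) by force
      qed
    qed
    have claim: "\<not> (t < \<rho>1 x \<and> \<rho>1 x \<le> b2)" if x: "x \<in> S" for x
    proof
      assume r: "t < \<rho>1 x \<and> \<rho>1 x \<le> b2"
      define r where "r = \<rho>1 x"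
      have "{z. \<rho>2 z < r} \<inter> S = {z. \<rho>2 z < t} \<inter> S"
      proof (intro set_eqI iffI)
        fix z assume "z \<in> {z. \<rho>2 z < r} \<inter> S"
        then have z: "z \<in> S" "\<rho>2 z < r" by auto
        have "z < y0"
        proof (rule ccontr)
          assume "\<not> z < y0"
          then have "\<rho>2 y0 \<le> \<rho>2 z" using mono2[OF y0S z(1)] by simp
          then show False using z(2) r by (simp add: r_def b2_def)
        qed
        then show "z \<in> {z. \<rho>2 z < t} \<inter> S" using below z by auto
      next
        fix z assume "z \<in> {z. \<rho>2 z < t} \<inter> S"
        then show "z \<in> {z. \<rho>2 z < r} \<inter> S" using r by (auto simp: r_def)
      qed
      then have "measure M {z. \<rho>2 z < r} = measure M {z. \<rho>2 z < t}" by (intro measure_cong_S) auto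
      then have weq: "W \<rho>2 r = W \<rho>2 t" using noatom2 by (simp add: W_def Plt_def)
      have i: "x * W \<rho>2 t - Cr \<rho>2 t \<le> x * W \<rho>2 r - Cr \<rho>2 r"
        using BR_ineq[OF br1 x, of t] tp by (simp add: r_def)
      then have "Cr \<rho>2 r - Cr \<rho>2 t \<le> 0" using weq by simp
      moreover have "(1 - d) * (r - t) \<le> Cr \<rho>2 r - Cr \<rho>2 t" using Cr_diff2(1)[OF st2, of t r] tp r by (simp add: r_def)
      moreover have "0 < (1 - d) * (r - t)" using d1 r by (simp add: r_def)
      ultimately show False by linarith
    qed
    obtain x where x: "x \<in> S" "(t + b2) / 2 \<le> \<rho>1 x" "\<rho>1 x \<le> \<rho>2 y0"
      using left_mass_ex[OF st1 st2 br2 y0S, of "(t + b2) / 2"] tp y0B by (auto simp: b2_def)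
    then show False using claim[OF x(1)] y0B by (simp add: b2_def)
  qed
qed

lemma sandwich:
  assumes p: "p \<in> S" and q: "q \<in> S" and pq: "p < q" and pos: "0 < \<rho>1 p"
    and yp: "yp \<in> S" "\<rho>2 yp = \<rho>1 p" and yq: "yq \<in> S" "\<rho>2 yq = \<rho>1 q"
  shows "(F q - F p) * yp * (1 - d * F yq) \<le> (F yq - F yp) * (q * (1 - d * F p))"
    and "(F yq - F yp) * (p * (1 - d * F q)) \<le> (F q - F p) * yq * (1 - d * F yp)"
proof -
  define tp tq where "tp = \<rho>1 p" and "tq = \<rho>1 q"
  have tpq: "tp < tq" using strict1[OF p q pq] mono1[OF p q] pq pos by (simp add: tp_def tq_def)
  have posq: "0 < \<rho>1 q" using tpq pos by (simp add: tp_def tq_def)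
  define D where "D = tq - tp"
  have tp0: "0 \<le> tp" using pos by (simp add: tp_def)
  have W2p: "W \<rho>2 tp = F yp" and W2q: "W \<rho>2 tq = F yq"
    using W2[OF yp(1)] W2[OF yq(1)] yp(2) yq(2) by (simp_all add: tp_def tq_def)
  have W1p: "W \<rho>1 tp = F p" and W1q: "W \<rho>1 tq = F q"
    using W1[OF p pos] W1[OF q posq] by (simp_all add: tp_def tq_def)
  have c2l: "D * (1 - d * F yq) \<le> Cr \<rho>2 tq - Cr \<rho>2 tp"
    using Cr_diff(1)[OF st2 tp0, of tq] tpq Plt2[OF yq(1)] yq(2) by (simp add: D_def tq_def)
  have c2u: "Cr \<rho>2 tq - Cr \<rho>2 tp \<le> D * (1 - d * F yp)"
    using Cr_diff(2)[OF st2 tp0, of tq] tpq Ple2[OF yp(1)] yp(2) by (simp add: D_def tp_def)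
  have c1l: "D * (1 - d * F q) \<le> Cr \<rho>1 tq - Cr \<rho>1 tp"
    using Cr_diff(1)[OF st1 tp0, of tq] tpq Plt1[OF q posq] by (simp add: D_def tq_def)
  have c1u: "Cr \<rho>1 tq - Cr \<rho>1 tp \<le> D * (1 - d * F p)"
    using Cr_diff(2)[OF st1 tp0, of tq] tpq Ple1[OF p pos] by (simp add: D_def tp_def)
  have i1: "q * W \<rho>2 tp - Cr \<rho>2 tp \<le> q * W \<rho>2 tq - Cr \<rho>2 tq"
    using BR_ineq[OF br1 q, of tp] tp0 by (simp add: tq_def)
  have i2: "p * W \<rho>2 tq - Cr \<rho>2 tq \<le> p * W \<rho>2 tp - Cr \<rho>2 tp"
    using BR_ineq[OF br1 p, of tq] tp0 tpq by (simp add: tp_def)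
  have i3: "yq * W \<rho>1 tp - Cr \<rho>1 tp \<le> yq * W \<rho>1 tq - Cr \<rho>1 tq"
    using BR_ineq[OF br2 yq(1), of tp] tp0 yq(2) by (simp add: tq_def)
  have i4: "yp * W \<rho>1 tq - Cr \<rho>1 tq \<le> yp * W \<rho>1 tp - Cr \<rho>1 tp"
    using BR_ineq[OF br2 yp(1), of tq] tp0 tpq yp(2) by (simp add: tp_def)
  have e1: "D * (1 - d * F yq) \<le> q * (F yq - F yp)" using c2l i1 W2p W2q by (simp add: algebra_simps)
  have e2: "p * (F yq - F yp) \<le> D * (1 - d * F yp)" using c2u i2 W2p W2q by (simp add: algebra_simps)
  have e3: "D * (1 - d * F q) \<le> yq * (F q - F p)" using c1l i3 W1p W1q by (simp add: algebra_simps)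
  have e4: "yp * (F q - F p) \<le> D * (1 - d * F p)" using c1u i4 W1p W1q by (simp add: algebra_simps)
  have pos1: "\<And>z. 0 \<le> 1 - d * F z"
  proof -
    fix z have "d * F z \<le> 1 * 1" using d0 d1 F_bounds[of z] by (intro mult_mono) auto
    then show "0 \<le> 1 - d * F z" by simp
  qed
  have "yp * (F q - F p) * (1 - d * F yq) \<le> D * (1 - d * F p) * (1 - d * F yq)"
    by (rule mult_right_mono[OF e4 pos1])
  also have "\<dots> = D * (1 - d * F yq) * (1 - d * F p)" by simp
  also have "\<dots> \<le> q * (F yq - F yp) * (1 - d * F p)"
    by (rule mult_right_mono[OF e1 pos1])
  finally show "(F q - F p) * yp * (1 - d * F yq) \<le> (F yq - F yp) * (q * (1 - d * F p))"
    by (simp add: algebra_simps)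
  have "p * (F yq - F yp) * (1 - d * F q) \<le> D * (1 - d * F yp) * (1 - d * F q)"
    by (rule mult_right_mono[OF e2 pos1])
  also have "\<dots> = D * (1 - d * F q) * (1 - d * F yp)" by simp
  also have "\<dots> \<le> yq * (F q - F p) * (1 - d * F yp)"
    by (rule mult_right_mono[OF e3 pos1])
  finally show "(F yq - F yp) * (p * (1 - d * F q)) \<le> (F q - F p) * yq * (1 - d * F yp)"
    by (simp add: algebra_simps)
qed

end

lemma quot_le1:
  fixes D E N1 N2 :: real
  assumes "0 < D" "0 < E" "N1 \<le> N2 * E"
  shows "N1 / (D * E) \<le> N2 / D"
proof -
  have "N1 / (D * E) \<le> (N2 * E) / (D * E)" using assms by (intro divide_right_mono) auto
  also have "\<dots> = N2 / D" using assms by simp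
  finally show ?thesis .
qed

lemma quot_le2:
  fixes D E N1 N2 :: real
  assumes "0 < D" "0 < E" "N2 * E \<le> N1"
  shows "N2 / D \<le> N1 / (D * E)"
proof -
  have "N2 / D = (N2 * E) / (D * E)" using assms by simp
  also have "\<dots> \<le> N1 / (D * E)" using assms by (intro divide_right_mono) auto
  finally show ?thesis .
qed

locale sandw = game +
  fixes k :: "real \<Rightarrow> real" and J :: "real set" and th :: real
  assumes Jopen: "open J" and JS: "J \<subseteq> S" and thJ: "th \<in> J"
    and kS: "\<And>x. x \<in> J \<Longrightarrow> k x \<in> S"
    and kmono: "\<And>p q. p \<in> J \<Longrightarrow> q \<in> J \<Longrightarrow> p < q \<Longrightarrow> k p < k q"
    and s1: "\<And>p q. p \<in> J \<Longrightarrow> q \<in> J \<Longrightarrow> p < q \<Longrightarrow>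
        (F q - F p) * k p * (1 - d * F (k q)) \<le> (F (k q) - F (k p)) * (q * (1 - d * F p))"
    and s2: "\<And>p q. p \<in> J \<Longrightarrow> q \<in> J \<Longrightarrow> p < q \<Longrightarrow>
        (F (k q) - F (k p)) * (p * (1 - d * F q)) \<le> (F q - F p) * k q * (1 - d * F (k p))"
begin

definition "Q x = (F x - F th) / (x - th)"
definition "G x = (F (k x) - F (k th)) / (x - th)"
definition "A x = k th * (1 - d * F (k x)) / (x * (1 - d * F th))"
definition "B x = k x * (1 - d * F (k th)) / (th * (1 - d * F x))"
definition "m = k th * (1 - d * F (k th)) / (th * (1 - d * F th))"

lemma omF: "1 - d \<le> 1 - d * F z" "0 < 1 - d * F z"
proof -
  have "d * F z \<le> d * 1" using d0 F_bounds[of z] by (intro mult_left_mono) auto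
  then show "1 - d \<le> 1 - d * F z" by simp
  then show "0 < 1 - d * F z" using d1 by simp
qed

lemma thS: "th \<in> S" using JS thJ by blast
lemma xpos: "x \<in> J \<Longrightarrow> 0 < x" using JS S_pos by blast
lemma kpos: "x \<in> J \<Longrightarrow> 0 < k x" using kS S_pos by blast

lemma Fk_strict: "p \<in> J \<Longrightarrow> q \<in> J \<Longrightarrow> p < q \<Longrightarrow> F (k p) < F (k q)"
  using F_strict kS kmono by blast

lemma F_strictJ: "p \<in> J \<Longrightarrow> q \<in> J \<Longrightarrow> p < q \<Longrightarrow> F p < F q"
  using F_strict JS by blast

lemma Q_pos: "x \<in> J \<Longrightarrow> x \<noteq> th \<Longrightarrow> 0 < Q x"
proof -
  assume x: "x \<in> J" "x \<noteq> th"
  then consider "x < th" | "th < x" by linarith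
  then show "0 < Q x"
  proof cases
    case 1 then show ?thesis using F_strictJ[OF x(1) thJ] by (simp add: Q_def divide_neg_neg)
  next
    case 2 then show ?thesis using F_strictJ[OF thJ x(1)] by (simp add: Q_def)
  qed
qed

lemma G_nonneg: "x \<in> J \<Longrightarrow> x \<noteq> th \<Longrightarrow> 0 \<le> G x"
proof -
  assume x: "x \<in> J" "x \<noteq> th"
  then consider "x < th" | "th < x" by linarith
  then show "0 \<le> G x"
  proof cases
    case 1 then show ?thesis using Fk_strict[OF x(1) thJ] by (simp add: G_def divide_nonpos_neg)
  next
    case 2 then show ?thesis using Fk_strict[OF thJ x(1)] by (simp add: G_def)
  qed
qed

lemma bounds_right:
  assumes x: "x \<in> J" "th < x"
  shows "Q x * A x \<le> G x" "G x \<le> Q x * B x"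
proof -
  have D: "0 < x - th" using x by simp
  have E1: "0 < x * (1 - d * F th)" using xpos[OF x(1)] omF by simp
  have E2: "0 < th * (1 - d * F x)" using xpos[OF thJ] omF by simp
  have "Q x * A x = ((F x - F th) * k th * (1 - d * F (k x))) / ((x - th) * (x * (1 - d * F th)))"
    unfolding Q_def A_def by (simp add: times_divide_times_eq mult.assoc)
  also have "\<dots> \<le> (F (k x) - F (k th)) / (x - th)"
    by (rule quot_le1[OF D E1 s1[OF thJ x]])
  finally show "Q x * A x \<le> G x" by (simp add: G_def)
  have "G x \<le> ((F x - F th) * k x * (1 - d * F (k th))) / ((x - th) * (th * (1 - d * F x)))"
    unfolding G_def by (rule quot_le2[OF D E2 s2[OF thJ x]])
  also have "\<dots> = Q x * B x"
    unfolding Q_def B_def by (simp add: times_divide_times_eq mult.assoc)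
  finally show "G x \<le> Q x * B x" .
qed

lemma Q_left: "Q x = (F th - F x) / (th - x)"
  unfolding Q_def by (metis minus_diff_eq minus_divide_divide)

lemma G_left: "G x = (F (k th) - F (k x)) / (th - x)"
  unfolding G_def by (metis minus_diff_eq minus_divide_divide)

lemma bounds_left:
  assumes x: "x \<in> J" "x < th"
  shows "Q x * B x \<le> G x" "G x \<le> Q x * A x"
proof -
  have D: "0 < th - x" using x by simp
  have E1: "0 < x * (1 - d * F th)" using xpos[OF x(1)] omF by simp
  have E2: "0 < th * (1 - d * F x)" using xpos[OF thJ] omF by simp
  have "Q x * B x = ((F th - F x) * k x * (1 - d * F (k th))) / ((th - x) * (th * (1 - d * F x)))"
    unfolding Q_left B_def by (simp add: times_divide_times_eq mult.assoc)
  also have "\<dots> \<le> (F (k th) - F (k x)) / (th - x)"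
    by (rule quot_le1[OF D E2 s1[OF x(1) thJ x(2)]])
  finally show "Q x * B x \<le> G x" by (simp add: G_left)
  have "G x \<le> ((F th - F x) * k th * (1 - d * F (k x))) / ((th - x) * (x * (1 - d * F th)))"
    unfolding G_left by (rule quot_le2[OF D E1 s2[OF x(1) thJ x(2)]])
  also have "\<dots> = Q x * A x"
    unfolding Q_left A_def by (simp add: times_divide_times_eq mult.assoc)
  finally show "G x \<le> Q x * A x" .
qed

lemma bounds:
  assumes x: "x \<in> J" "x \<noteq> th"
  shows "Q x * min (A x) (B x) \<le> G x" "G x \<le> Q x * max (A x) (B x)"
proof -
  have q: "0 \<le> Q x" using Q_pos[OF x] by simp
  have a1: "Q x * min (A x) (B x) \<le> Q x * A x" "Q x * min (A x) (B x) \<le> Q x * B x"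
    using q by (auto intro: mult_left_mono)
  have a2: "Q x * A x \<le> Q x * max (A x) (B x)" "Q x * B x \<le> Q x * max (A x) (B x)"
    using q by (auto intro: mult_left_mono)
  have "Q x * min (A x) (B x) \<le> G x \<and> G x \<le> Q x * max (A x) (B x)"
  proof (cases "x < th")
    case True then show ?thesis using bounds_left[OF x(1) True] a1 a2 by linarith
  next
    case False then have "th < x" using x by linarith
    then show ?thesis using bounds_right[OF x(1) \<open>th < x\<close>] a1 a2 by linarith
  qed
  then show "Q x * min (A x) (B x) \<le> G x" "G x \<le> Q x * max (A x) (B x)" by auto
qed

end

context sandw begin

lemma ev_J: "eventually (\<lambda>x. x \<in> J \<and> x \<noteq> th) (at th)"
  using eventually_at_in_open[OF Jopen thJ] by simp

lemma Fk_cont: "((\<lambda>x. F (k x)) \<longlongrightarrow> F (k th)) (at th)"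
proof -
  obtain e where e: "e > 0" "cball th e \<subseteq> J" using Jopen thJ open_contains_cball by blast
  define p0 q0 where "p0 = th - e" and "q0 = th + e"
  have p0J: "p0 \<in> J" and q0J: "q0 \<in> J" using e by (auto simp: p0_def q0_def dist_real_def)
  have p0pos: "0 < p0" using xpos[OF p0J] .
  define C where "C = max (k th / (p0 * (1 - d))) (k q0 / (th * (1 - d)))"
  have bnd: "norm (F (k x) - F (k th)) \<le> C * \<bar>F x - F th\<bar>"
    if x: "x \<in> J" "x \<noteq> th" "dist x th < e" for x
  proof -
    have xr: "p0 \<le> x" "x \<le> q0" using x(3) by (auto simp: p0_def q0_def dist_real_def)
    have kx: "k x \<le> k q0" using kmono[OF x(1) q0J] xr by (cases "x = q0") auto
    have "A x \<le> k th / (p0 * (1 - d))"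
      unfolding A_def
    proof (rule frac_le)
      show "0 \<le> k th" using kpos[OF thJ] by simp
      show "k th * (1 - d * F (k x)) \<le> k th"
        using kpos[OF thJ] F_bounds[of "k x"] d0 by (simp add: mult_left_le)
      show "0 < p0 * (1 - d)" using p0pos d1 by simp
      show "p0 * (1 - d) \<le> x * (1 - d * F th)"
        using xr p0pos omF(1)[of th] d1 by (intro mult_mono) auto
    qed
    then have A: "A x \<le> C" by (simp add: C_def)
    have "B x \<le> k q0 / (th * (1 - d))"
      unfolding B_def
    proof (rule frac_le)
      show "0 \<le> k q0" using kpos[OF q0J] by simp
      have "k x * (1 - d * F (k th)) \<le> k x"
        using kpos[OF x(1)] F_bounds[of "k th"] d0 by (simp add: mult_left_le)
      then show "k x * (1 - d * F (k th)) \<le> k q0" using kx by linarith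
      show "0 < th * (1 - d)" using xpos[OF thJ] d1 by simp
      show "th * (1 - d) \<le> th * (1 - d * F x)"
        using xpos[OF thJ] omF(1)[of x] by (intro mult_left_mono) auto
    qed
    then have B: "B x \<le> C" by (simp add: C_def)
    have q: "0 < Q x" using Q_pos[OF x(1,2)] .
    have "G x \<le> Q x * max (A x) (B x)" using bounds(2)[OF x(1,2)] .
    also have "\<dots> \<le> Q x * C" using A B q by (intro mult_left_mono) auto
    finally have g: "G x \<le> Q x * C" .
    have g0: "0 \<le> G x" using G_nonneg[OF x(1,2)] .
    have e1: "F (k x) - F (k th) = G x * (x - th)" using x(2) by (simp add: G_def)
    have e2: "F x - F th = Q x * (x - th)" using x(2) by (simp add: Q_def)
    have "norm (F (k x) - F (k th)) = G x * \<bar>x - th\<bar>"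
      unfolding e1 using g0 by (simp add: abs_mult)
    also have "\<dots> \<le> Q x * C * \<bar>x - th\<bar>" using g by (intro mult_right_mono) auto
    also have "\<dots> = C * \<bar>F x - F th\<bar>"
      unfolding e2 using q by (simp add: abs_mult)
    finally show ?thesis .
  qed
  have ev: "eventually (\<lambda>x. norm (F (k x) - F (k th)) \<le> C * \<bar>F x - F th\<bar>) (at th)"
  proof -
    have "eventually (\<lambda>x. dist x th < e) (at th)" using e(1) by (auto simp: eventually_at)
    then show ?thesis using ev_J by eventually_elim (use bnd in auto)
  qed
  have "(F \<longlongrightarrow> F th) (at th)" using F_cont[OF thS] by (simp add: isCont_def)
  then have "((\<lambda>x. C * \<bar>F x - F th\<bar>) \<longlongrightarrow> C * \<bar>F th - F th\<bar>) (at th)"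
    by (intro tendsto_intros)
  then have "((\<lambda>x. C * \<bar>F x - F th\<bar>) \<longlongrightarrow> 0) (at th)" by simp
  then have "((\<lambda>x. F (k x) - F (k th)) \<longlongrightarrow> 0) (at th)" by (rule Lim_null_comparison[OF ev])
  then have "((\<lambda>x. F (k x) - F (k th) + F (k th)) \<longlongrightarrow> 0 + F (k th)) (at th)"
    by (intro tendsto_add tendsto_const)
  then show ?thesis by simp
qed

lemma F_inj: "inj_on F S"
proof (rule inj_onI)
  fix x y assume "x \<in> S" "y \<in> S" "F x = F y"
  then show "x = y" using F_strict by (metis linorder_neqE_linordered_idom order_less_irrefl)
qed

lemma k_cont: "(k \<longlongrightarrow> k th) (at th)"
proof -
  define y where "y = k th"
  have yS: "y \<in> S" using kS[OF thJ] by (simp add: y_def)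
  obtain e where e: "e > 0" "cball y e \<subseteq> S" using S_open yS open_contains_cball by blast
  define Finv where "Finv = inv_into S F"
  have "isCont Finv (F y)"
  proof (rule isCont_inverse_function[where x=y and f=F and g=Finv, OF e(1)])
    fix z assume "\<bar>z - y\<bar> \<le> e"
    then have zS: "z \<in> S" using e(2) by (auto simp: dist_real_def)
    show "Finv (F z) = z" unfolding Finv_def by (rule inv_into_f_f[OF F_inj zS])
  next
    fix z assume "\<bar>z - y\<bar> \<le> e"
    then have zS: "z \<in> S" using e(2) by (auto simp: dist_real_def)
    show "isCont F z" by (rule F_cont[OF zS])
  qed
  then have "((\<lambda>x. Finv (F (k x))) \<longlongrightarrow> Finv (F y)) (at th)"
    using Fk_cont unfolding y_def by (rule isCont_tendsto_compose)
  moreover have "Finv (F y) = y" unfolding Finv_def by (rule inv_into_f_f[OF F_inj yS])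
  ultimately have lim: "((\<lambda>x. Finv (F (k x))) \<longlongrightarrow> k th) (at th)" by (simp add: y_def)
  have ev: "eventually (\<lambda>x. Finv (F (k x)) = k x) (at th)"
    using ev_J by eventually_elim (simp add: Finv_def inv_into_f_f[OF F_inj kS])
  show ?thesis by (rule Lim_transform_eventually[OF lim ev])
qed

end

context sandw begin

lemma Q_lim: "(Q \<longlongrightarrow> f th) (at th)"
  using F_deriv[OF thS] unfolding has_field_derivative_iff Q_def[abs_def] .

lemma A_lim: "(A \<longlongrightarrow> m) (at th)"
proof -
  have "((\<lambda>x. k th * (1 - d * F (k x)) / (x * (1 - d * F th))) \<longlongrightarrow>
      k th * (1 - d * F (k th)) / (th * (1 - d * F th))) (at th)"
    using xpos[OF thJ] omF(2)[of th]
    by (intro tendsto_intros Fk_cont) auto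
  then show ?thesis unfolding A_def[abs_def] m_def .
qed

lemma B_lim: "(B \<longlongrightarrow> m) (at th)"
proof -
  have Fl: "(F \<longlongrightarrow> F th) (at th)" using F_cont[OF thS] by (simp add: isCont_def)
  have "((\<lambda>x. k x * (1 - d * F (k th)) / (th * (1 - d * F x))) \<longlongrightarrow>
      k th * (1 - d * F (k th)) / (th * (1 - d * F th))) (at th)"
    using xpos[OF thJ] omF(2)[of th]
    by (intro tendsto_intros k_cont Fl) auto
  then show ?thesis unfolding B_def[abs_def] m_def .
qed

lemma G_lim: "(G \<longlongrightarrow> f th * m) (at th)"
proof (rule tendsto_sandwich)
  show "eventually (\<lambda>x. Q x * min (A x) (B x) \<le> G x) (at th)"
    using ev_J by eventually_elim (use bounds in auto)
  show "eventually (\<lambda>x. G x \<le> Q x * max (A x) (B x)) (at th)"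
    using ev_J by eventually_elim (use bounds in auto)
  have "((\<lambda>x. Q x * min (A x) (B x)) \<longlongrightarrow> f th * min m m) (at th)"
    by (intro tendsto_intros Q_lim A_lim B_lim)
  then show "((\<lambda>x. Q x * min (A x) (B x)) \<longlongrightarrow> f th * m) (at th)" by simp
  have "((\<lambda>x. Q x * max (A x) (B x)) \<longlongrightarrow> f th * max m m) (at th)"
    by (intro tendsto_intros Q_lim A_lim B_lim)
  then show "((\<lambda>x. Q x * max (A x) (B x)) \<longlongrightarrow> f th * m) (at th)" by simp
qed

lemma k_ne: "x \<in> J \<Longrightarrow> x \<noteq> th \<Longrightarrow> k x \<noteq> k th"
proof -
  assume x: "x \<in> J" "x \<noteq> th"
  show "k x \<noteq> k th"
  proof (cases "x < th")
    case True then show ?thesis using kmono[OF x(1) thJ] by simp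
  next
    case False then have "th < x" using x by simp
    then show ?thesis using kmono[OF thJ x(1)] by simp
  qed
qed

lemma k_deriv: "(k has_real_derivative (f th * m / f (k th))) (at th)"
proof -
  define y where "y = k th"
  have yS: "y \<in> S" using kS[OF thJ] by (simp add: y_def)
  have fy: "0 < f y" using fpos yS by simp
  define R where "R z = (F z - F y) / (z - y)" for z
  have Rl: "(R \<longlongrightarrow> f y) (at y)"
    using F_deriv[OF yS] unfolding has_field_derivative_iff R_def[abs_def] .
  have kat: "filterlim k (at y) (at th)"
  proof (rule filterlim_atI)
    show "(k \<longlongrightarrow> y) (at th)" using k_cont by (simp add: y_def)
    show "eventually (\<lambda>x. k x \<noteq> y) (at th)"
      using ev_J by eventually_elim (use k_ne in \<open>auto simp: y_def\<close>)
  qed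
  have Rk: "((\<lambda>x. R (k x)) \<longlongrightarrow> f y) (at th)"
    by (rule filterlim_compose[OF Rl kat])
  have lim: "((\<lambda>x. G x / R (k x)) \<longlongrightarrow> f th * m / f y) (at th)"
    using fy by (intro tendsto_divide G_lim Rk) auto
  have ev: "eventually (\<lambda>x. G x / R (k x) = (k x - k th) / (x - th)) (at th)"
    using ev_J
  proof eventually_elim
    case (elim x)
    then have x: "x \<in> J" "x \<noteq> th" by auto
    have kne: "k x \<noteq> y" using k_ne[OF x] by (simp add: y_def)
    have Fne: "F (k x) \<noteq> F y"
      using kne F_inj kS[OF x(1)] yS by (auto dest: inj_onD)
    have d1: "x - th \<noteq> 0" using x by simp
    have d2: "k x - y \<noteq> 0" using kne by simp
    have d3: "F (k x) - F y \<noteq> 0" using Fne by simp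
    have aux: "\<And>a b c :: real. a \<noteq> 0 \<Longrightarrow> (a / b) / (a / c) = c / b"
      by (simp add: divide_divide_eq_left divide_divide_eq_right)
    have "G x / R (k x) = ((F (k x) - F y) / (x - th)) / ((F (k x) - F y) / (k x - y))"
      unfolding G_def R_def y_def ..
    also have "\<dots> = (k x - y) / (x - th)" by (rule aux[OF d3])
    finally show ?case by (simp add: y_def)
  qed
  have "((\<lambda>x. (k x - k th) / (x - th)) \<longlongrightarrow> f th * m / f y) (at th)"
    by (rule Lim_transform_eventually[OF lim ev])
  then show ?thesis unfolding has_field_derivative_iff y_def .
qed

end

context game begin

lemma AE_S: "AE x in M. x \<in> S"
proof -
  have m: "measure M (-S) = 0"
    by (rule measure_out_S) (auto simp: S_open borel_open borel_comp)
  have "emeasure M (-S) = 0"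
    using m P.emeasure_eq_measure by simp
  then show ?thesis
    by (intro AE_I[of _ _ "-S"]) (auto simp: S_open borel_open borel_comp)
qed

lemma Imn_nonneg: "strat \<rho> \<Longrightarrow> 0 \<le> r \<Longrightarrow> 0 \<le> Imn \<rho> r"
  unfolding Imn_def by (rule integral_nonneg_AE) (auto simp: strat_nn)

lemma Cr_nonneg: "strat \<rho> \<Longrightarrow> 0 \<le> r \<Longrightarrow> 0 \<le> Cr \<rho> r"
  unfolding Cr_def using Imn_nonneg[of \<rho> r] d0 d1 by simp

lemma Cr_integral:
  assumes st: "strat \<rho>" and r: "0 \<le> r"
  shows "Cr \<rho> r = (\<integral> x. d * min r (\<rho> x) + (1 - d) * r \<partial>M)"
proof -
  have i: "integrable M (\<lambda>x. min r (\<rho> x))" using integrable_min[OF strat_meas[OF st]] st r by (auto simp: strat_def)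
  have "(\<integral> x. d * min r (\<rho> x) + (1 - d) * r \<partial>M) = d * Imn \<rho> r + (1 - d) * r"
    unfolding Imn_def using i P.prob_space
    by (subst Bochner_Integration.integral_add) auto
  then show ?thesis by (simp add: Cr_def)
qed

definition rl :: "(real \<Rightarrow> ennreal) \<Rightarrow> real \<Rightarrow> real" where "rl s x = enn2real (s x)"

lemma rl_strat: "s \<in> borel_measurable borel \<Longrightarrow> strat (rl s)"
  unfolding strat_def rl_def by auto

lemma EU_AL_inf: "EU_AL lo hi f d s th \<infinity> = - \<infinity>"
proof -
  have "(\<integral>\<^sup>+ x. (ennreal d * min \<infinity> (s x) + ennreal (1 - d) * \<infinity>) \<partial>M) = \<infinity>"
  proof -
    have "ennreal (1 - d) * \<infinity> = \<infinity>" using d1 by (simp add: ennreal_mult_top)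
    then have "(\<integral>\<^sup>+ x. (ennreal d * min \<infinity> (s x) + ennreal (1 - d) * \<infinity>) \<partial>M) = (\<integral>\<^sup>+ x. \<infinity> \<partial>M)"
      by simp
    also have "\<dots> = \<infinity>" using P.emeasure_space_1 by simp
    finally show ?thesis .
  qed
  then show ?thesis by (simp add: EU_AL_def)
qed

lemma EU_AL_zero: "EU_AL lo hi f d s th 0 > - \<infinity>"
  by (simp add: EU_AL_def zero_ennreal.rep_eq)

lemma EU_AL_fin:
  assumes s: "s \<in> borel_measurable borel" and fin: "\<forall>x\<in>S. s x \<noteq> \<infinity>" and r: "0 \<le> r"
  shows "EU_AL lo hi f d s th (ennreal r) = ereal (U (rl s) th r)"
proof -
  note [measurable] = s
  have st: "strat (rl s)" using rl_strat[OF s] .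
  have fin': "ennreal (enn2real (s x)) = s x" if x: "x \<in> S" for x
  proof -
    have "s x \<noteq> \<top>" using fin x by simp
    then show ?thesis by (simp add: ennreal_enn2real_if)
  qed
  have m1: "measure M {x. s x < ennreal r} = Plt (rl s) r"
    unfolding Plt_def rl_def
  proof (rule measure_cong_S)
    show "{x. s x < ennreal r} \<inter> S = {x. enn2real (s x) < r} \<inter> S"
    proof (intro set_eqI iffI)
      fix x assume x: "x \<in> {x. s x < ennreal r} \<inter> S"
      then have "ennreal (enn2real (s x)) < ennreal r" using fin' by simp
      then show "x \<in> {x. enn2real (s x) < r} \<inter> S" using x r by (simp add: ennreal_less_iff)
    next
      fix x assume x: "x \<in> {x. enn2real (s x) < r} \<inter> S"
      then have "ennreal (enn2real (s x)) < ennreal r" using r by (simp add: ennreal_less_iff)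
      then show "x \<in> {x. s x < ennreal r} \<inter> S" using x fin' by simp
    qed
  qed auto
  have m2: "measure M {x. s x = ennreal r} = Peq (rl s) r"
    unfolding Peq_def rl_def
  proof (rule measure_cong_S)
    show "{x. s x = ennreal r} \<inter> S = {x. enn2real (s x) = r} \<inter> S"
    proof (intro set_eqI iffI)
      fix x assume "x \<in> {x. s x = ennreal r} \<inter> S" then show "x \<in> {x. enn2real (s x) = r} \<inter> S"
        using r by auto
    next
      fix x assume x: "x \<in> {x. enn2real (s x) = r} \<inter> S"
      then have "s x = ennreal (enn2real (s x))" using fin by (auto simp: ennreal_enn2real_if)
      then show "x \<in> {x. s x = ennreal r} \<inter> S" using x by auto
    qed
  qed auto
  have int: "(\<integral>\<^sup>+ x. (ennreal d * min (ennreal r) (s x) + ennreal (1 - d) * ennreal r) \<partial>M)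
      = ennreal (Cr (rl s) r)"
  proof -
    have "(\<integral>\<^sup>+ x. (ennreal d * min (ennreal r) (s x) + ennreal (1 - d) * ennreal r) \<partial>M)
        = (\<integral>\<^sup>+ x. ennreal (d * min r (rl s x) + (1 - d) * r) \<partial>M)"
    proof (rule nn_integral_cong_AE)
      show "AE x in M. ennreal d * min (ennreal r) (s x) + ennreal (1 - d) * ennreal r
          = ennreal (d * min r (rl s x) + (1 - d) * r)"
        using AE_S
      proof eventually_elim
        case (elim x)
        then have sx: "s x = ennreal (rl s x)" "0 \<le> rl s x" using fin by (auto simp: rl_def ennreal_enn2real_if)
        have "min (ennreal r) (s x) = ennreal (min r (rl s x))"
          unfolding sx(1) using r sx(2) by (auto simp: min_def)
        then show ?case using r sx(2) d0 d1
          by (simp add: ennreal_mult[symmetric] ennreal_plus[symmetric] del: ennreal_plus)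
      qed
    qed
    also have "\<dots> = ennreal (\<integral> x. d * min r (rl s x) + (1 - d) * r \<partial>M)"
    proof (rule nn_integral_eq_integral)
      show "integrable M (\<lambda>x. d * min r (rl s x) + (1 - d) * r)"
        using integrable_min[OF strat_meas[OF st]] st r P.prob_space by (auto simp: strat_def)
      show "AE x in M. 0 \<le> d * min r (rl s x) + (1 - d) * r"
        using r d0 d1 st by (auto simp: strat_def)
    qed
    also have "\<dots> = ennreal (Cr (rl s) r)" using Cr_integral[OF st r] by simp
    finally show ?thesis .
  qed
  have "EU_AL lo hi f d s th (ennreal r) = ereal (th * Plt (rl s) r + th / 2 * Peq (rl s) r) - ereal (Cr (rl s) r)"
    unfolding EU_AL_def m1 m2 int using Cr_nonneg[OF st r] by simp
  then show ?thesis by (simp add: U_def W_def algebra_simps)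
qed

end

context game begin

lemma AL_BR:
  assumes "AL_eq lo hi f d s1 s2"
  shows "\<forall>th\<in>S. \<forall>a. EU_AL lo hi f d s2 th a \<le> EU_AL lo hi f d s2 th (s1 th)"
    and "\<forall>th\<in>S. \<forall>a. EU_AL lo hi f d s1 th a \<le> EU_AL lo hi f d s1 th (s2 th)"
    and "s1 \<in> borel_measurable borel" "s2 \<in> borel_measurable borel"
    and "measure M {th. s2 th = 0} = 0"
  using assms unfolding AL_eq_def is_eq_def by auto

lemma BR_fin:
  assumes "\<forall>a. EU_AL lo hi f d s' th a \<le> EU_AL lo hi f d s' th b"
  shows "b \<noteq> \<infinity>"
proof
  assume "b = \<infinity>"
  then have "EU_AL lo hi f d s' th 0 \<le> - \<infinity>" using assms EU_AL_inf by metis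
  then show False using EU_AL_zero[of s' th] by simp
qed

lemma AL_fin:
  assumes "AL_eq lo hi f d s1 s2" "th \<in> S"
  shows "s1 th \<noteq> \<infinity>" "s2 th \<noteq> \<infinity>"
  using BR_fin AL_BR[OF assms(1)] assms(2) by blast+

lemma ennreal_rl: "s x \<noteq> \<infinity> \<Longrightarrow> s x = ennreal (rl s x)"
  by (simp add: rl_def ennreal_enn2real_if)

lemma AL_BR_real:
  assumes s': "s' \<in> borel_measurable borel" and fin': "\<forall>x\<in>S. s' x \<noteq> \<infinity>"
    and fin: "\<forall>x\<in>S. s x \<noteq> \<infinity>"
    and br: "\<forall>th\<in>S. \<forall>a. EU_AL lo hi f d s' th a \<le> EU_AL lo hi f d s' th (s th)"
  shows "BR (rl s') (rl s)"
  unfolding BR_def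
proof (intro ballI allI impI)
  fix th r assume th: "th \<in> S" and r: "0 \<le> (r::real)"
  have "EU_AL lo hi f d s' th (ennreal r) \<le> EU_AL lo hi f d s' th (ennreal (rl s th))"
    using br th ennreal_rl[of s th] fin by metis
  then show "U (rl s') th r \<le> U (rl s') th (rl s th)"
    using EU_AL_fin[OF s' fin' r] EU_AL_fin[OF s' fin', of "rl s th"] by (simp add: rl_def)
qed

lemma AL_eqm:
  assumes eq: "AL_eq lo hi f d s1 s2"
  shows "eqm lo hi f d (rl s1) (rl s2)"
proof -
  note A = AL_BR[OF eq]
  have f1: "\<forall>x\<in>S. s1 x \<noteq> \<infinity>" and f2: "\<forall>x\<in>S. s2 x \<noteq> \<infinity>" using AL_fin[OF eq] by auto
  note [measurable] = A(3,4)
  have "measure M {x. rl s2 x = 0} = measure M {th. s2 th = 0}"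
  proof (rule measure_cong_S)
    show "{x. rl s2 x = 0} \<inter> S = {th. s2 th = 0} \<inter> S"
    proof (intro set_eqI iffI)
      fix x assume x: "x \<in> {x. rl s2 x = 0} \<inter> S"
      then have "s2 x = ennreal (rl s2 x)" using f2 ennreal_rl by blast
      then show "x \<in> {th. s2 th = 0} \<inter> S" using x by simp
    next
      fix x assume x: "x \<in> {th. s2 th = 0} \<inter> S"
      then show "x \<in> {x. rl s2 x = 0} \<inter> S" by (simp add: rl_def)
    qed
  qed (auto simp: rl_def)
  then have z: "measure M {x. rl s2 x = 0} = 0" using A(5) by simp
  show ?thesis
    apply (unfold_locales)
    using rl_strat[OF A(3)] rl_strat[OF A(4)] AL_BR_real[OF A(4) f2 f1 A(1)]
      AL_BR_real[OF A(3) f1 f2 A(2)] z by auto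
qed

end

locale aleq = game +
  fixes s1 s2 :: "real \<Rightarrow> ennreal"
  assumes eq: "AL_eq lo hi f d s1 s2"
begin

sublocale E: eqm lo hi f d "rl s1" "rl s2" by (rule AL_eqm[OF eq])

lemma fin1: "x \<in> S \<Longrightarrow> s1 x = ennreal (rl s1 x)" using AL_fin[OF eq] ennreal_rl by blast
lemma fin2: "x \<in> S \<Longrightarrow> s2 x = ennreal (rl s2 x)" using AL_fin[OF eq] ennreal_rl by blast

lemma pos1:
  assumes th: "th \<in> S" "th1 lo hi s1 < ereal th"
  shows "0 < rl s1 th"
proof -
  have "s1 th \<noteq> 0"
  proof
    assume "s1 th = 0"
    then have "ereal th \<in> ereal ` {th \<in> S. s1 th = 0}" using th by auto
    then have "ereal th \<le> th1 lo hi s1" unfolding th1_def by (rule Sup_upper)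
    then show False using th(2) by simp
  qed
  then have "rl s1 th \<noteq> 0" using fin1[OF th(1)] by (metis ennreal_0)
  then show ?thesis using E.nn1[of th] by simp
qed

lemma ttf_val:
  assumes th: "th \<in> S" and y: "y \<in> S" "rl s2 y = rl s1 th"
  shows "ttf lo hi s1 s2 th = y"
proof -
  have "{th' \<in> S. s1 th \<le> s2 th'} = {th' \<in> S. y \<le> th'}"
  proof (intro set_eqI iffI)
    fix x assume x: "x \<in> {th' \<in> S. s1 th \<le> s2 th'}"
    then have "rl s1 th \<le> rl s2 x" using fin1[OF th] fin2[of x] E.nn2[of x] by auto
    then show "x \<in> {th' \<in> S. y \<le> th'}" using x E.strict2_le_iff[OF y(1), of x] y(2) by auto
  next
    fix x assume x: "x \<in> {th' \<in> S. y \<le> th'}"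
    then have "rl s1 th \<le> rl s2 x" using E.strict2_le_iff[OF y(1), of x] y(2) by auto
    then show "x \<in> {th' \<in> S. s1 th \<le> s2 th'}" using x fin1[OF th] fin2[of x] E.nn2[of x] by auto
  qed
  moreover have "Inf {th' \<in> S. y \<le> th'} = y" using y(1) by (intro cInf_eq_minimum) auto
  ultimately show ?thesis using th by (simp add: ttf_def)
qed

definition "J = {x \<in> S. th1 lo hi s1 < ereal x}"

lemma J_open: "open J"
proof -
  have "open {x::real. th1 lo hi s1 < ereal x}"
  proof (cases "th1 lo hi s1")
    case (real r)
    then have "{x::real. th1 lo hi s1 < ereal x} = {r<..}" by auto
    then show ?thesis by simp
  next
    case PInf
    then have "{x::real. th1 lo hi s1 < ereal x} = {}" by auto
    then show ?thesis by simp
  next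
    case MInf
    then have "{x::real. th1 lo hi s1 < ereal x} = UNIV" by auto
    then show ?thesis by simp
  qed
  moreover have "J = S \<inter> {x::real. th1 lo hi s1 < ereal x}" by (auto simp: J_def)
  ultimately show ?thesis using S_open by (metis open_Int)
qed

lemma J_S: "J \<subseteq> S" by (auto simp: J_def)

lemma k_prop:
  assumes x: "x \<in> J"
  shows "ttf lo hi s1 s2 x \<in> S" "rl s2 (ttf lo hi s1 s2 x) = rl s1 x" "0 < rl s1 x"
proof -
  have xS: "x \<in> S" and xt: "th1 lo hi s1 < ereal x" using x by (auto simp: J_def)
  have p: "0 < rl s1 x" using pos1[OF xS xt] .
  obtain y where y: "y \<in> S" "rl s2 y = rl s1 x" using E.match[OF xS p] by blast
  have "ttf lo hi s1 s2 x = y" using ttf_val[OF xS y] .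
  then show "ttf lo hi s1 s2 x \<in> S" "rl s2 (ttf lo hi s1 s2 x) = rl s1 x" "0 < rl s1 x"
    using y p by auto
qed

lemma sandw_inst:
  assumes th: "th \<in> J"
  shows "sandw lo hi f d (ttf lo hi s1 s2) J th"
proof (unfold_locales)
  show "open J" by (rule J_open)
  show "J \<subseteq> S" by (rule J_S)
  show "th \<in> J" by (rule th)
  show "\<And>x. x \<in> J \<Longrightarrow> ttf lo hi s1 s2 x \<in> S" using k_prop by blast
  fix p q assume p: "p \<in> J" and q: "q \<in> J" and pq: "p < q"
  have pS: "p \<in> S" and qS: "q \<in> S" using p q J_S by auto
  have lt: "rl s1 p < rl s1 q" using E.strict1[OF pS qS pq] E.mono1[OF pS qS] pq k_prop(3)[OF q] by simp
  then have "rl s2 (ttf lo hi s1 s2 p) < rl s2 (ttf lo hi s1 s2 q)" using k_prop(2)[OF p] k_prop(2)[OF q] by simp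
  then show "ttf lo hi s1 s2 p < ttf lo hi s1 s2 q" using E.strict2_iff k_prop(1)[OF p] k_prop(1)[OF q] by blast
next
  fix p q assume p: "p \<in> J" and q: "q \<in> J" and pq: "p < q"
  have pS: "p \<in> S" and qS: "q \<in> S" using p q J_S by auto
  show "(F q - F p) * ttf lo hi s1 s2 p * (1 - d * F (ttf lo hi s1 s2 q))
      \<le> (F (ttf lo hi s1 s2 q) - F (ttf lo hi s1 s2 p)) * (q * (1 - d * F p))"
    by (rule E.sandwich(1)[OF pS qS pq k_prop(3)[OF p] k_prop(1)[OF p] k_prop(2)[OF p] k_prop(1)[OF q] k_prop(2)[OF q]])
next
  fix p q assume p: "p \<in> J" and q: "q \<in> J" and pq: "p < q"
  have pS: "p \<in> S" and qS: "q \<in> S" using p q J_S by auto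
  show "(F (ttf lo hi s1 s2 q) - F (ttf lo hi s1 s2 p)) * (p * (1 - d * F q))
      \<le> (F q - F p) * ttf lo hi s1 s2 q * (1 - d * F (ttf lo hi s1 s2 p))"
    by (rule E.sandwich(2)[OF pS qS pq k_prop(3)[OF p] k_prop(1)[OF p] k_prop(2)[OF p] k_prop(1)[OF q] k_prop(2)[OF q]])
qed

lemma ode:
  assumes th: "th \<in> S" "th1 lo hi s1 < ereal th"
  shows "(ttf lo hi s1 s2 has_real_derivative ode_rhs lo hi f d th (ttf lo hi s1 s2 th)) (at th)"
proof -
  have thJ: "th \<in> J" using th by (simp add: J_def)
  interpret SW: sandw lo hi f d "ttf lo hi s1 s2" J th by (rule sandw_inst[OF thJ])
  define y where "y = ttf lo hi s1 s2 th"
  have yS: "y \<in> S" using k_prop(1)[OF thJ] by (simp add: y_def)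
  have nz: "f y \<noteq> 0" "f th \<noteq> 0" "th \<noteq> 0" "y \<noteq> 0" "1 - d * F th \<noteq> 0" "1 - d * F y \<noteq> 0"
    using fpos yS th(1) S_pos[OF yS] S_pos[OF th(1)] SW.omF(2)[of th] SW.omF(2)[of y] by auto
  have "f th * SW.m / f y = ode_rhs lo hi f d th y"
    unfolding SW.m_def ode_rhs_def y_def[symmetric] using nz by (simp add: field_simps)
  then show ?thesis using SW.k_deriv by (simp add: y_def)
qed

end

context game begin

definition lam :: "real \<Rightarrow> real" where "lam x = f x / (x * (1 - d * F x))"

lemma omF': "0 < 1 - d * F z"
proof -
  have "d * F z \<le> d * 1" using d0 F_bounds[of z] by (intro mult_left_mono) auto
  then show ?thesis using d1 by simp
qed

lemma lam_cont: "{a..b} \<subseteq> S \<Longrightarrow> continuous_on {a..b} lam"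
proof -
  assume sub: "{a..b} \<subseteq> S"
  have cf: "continuous_on {a..b} f" using fcont sub continuous_on_subset by blast
  have cF: "continuous_on {a..b} F"
    using F_cont sub by (intro continuous_at_imp_continuous_on) auto
  have nz: "\<forall>x\<in>{a..b}. x * (1 - d * F x) \<noteq> 0"
    using sub S_pos omF' by (auto simp: subset_iff) (metis less_irrefl)+
  show ?thesis unfolding lam_def
    by (intro continuous_on_divide cf continuous_on_mult continuous_on_id continuous_on_diff
        continuous_on_const cF nz)
qed

lemma Lambda_deriv:
  assumes th0: "th0 \<in> S" and z: "z \<in> S"
  shows "((\<lambda>u. Lambda lo hi f d th0 u) has_real_derivative lam z) (at z)"
proof -
  obtain a1 b1 where 1: "a1 \<in> S" "b1 \<in> S" "a1 < th0" "th0 < b1" using S_nbhd[OF th0] by metis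
  obtain a2 b2 where 2: "a2 \<in> S" "b2 \<in> S" "a2 < z" "z < b2" using S_nbhd[OF z] by metis
  define a b where "a = min a1 a2" and "b = max b1 b2"
  have aS: "a \<in> S" and bS: "b \<in> S" using 1 2 by (auto simp: a_def b_def min_def max_def)
  have sub: "{a..b} \<subseteq> S" using S_between[OF aS bS] by auto
  have ord: "a \<le> th0" "th0 \<le> b" "a < z" "z < b" using 1 2 by (auto simp: a_def b_def)
  have "((\<lambda>u. LBINT y=th0..u. lam y) has_vector_derivative lam z) (at z within {a..b})"
    by (rule interval_integral_FTC2[OF ord(1,2) lam_cont[OF sub]]) (use ord in auto)
  then have "((\<lambda>u. LBINT y=th0..u. lam y) has_real_derivative lam z) (at z)"
    using at_within_Icc_at[OF ord(3,4)] by (simp add: has_real_derivative_iff_has_vector_derivative)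
  moreover have "(\<lambda>u. Lambda lo hi f d th0 u) = (\<lambda>u. LBINT y=th0..u. lam y)"
    by (simp add: Lambda_def lam_def[abs_def])
  ultimately show ?thesis by simp
qed

end

context aleq begin

lemma J_convex: "convex J"
proof -
  have "is_interval J"
    unfolding is_interval_1
  proof (intro ballI allI impI)
    fix a b x assume a: "a \<in> J" and b: "b \<in> J" and x: "a \<le> x \<and> x \<le> b"
    then have "x \<in> S" using S_between J_S by blast
    moreover have "th1 lo hi s1 < ereal x" using a x by (auto simp: J_def intro: less_le_trans)
    ultimately show "x \<in> J" by (simp add: J_def)
  qed
  then show ?thesis by (simp add: is_interval_convex_1)
qed

lemma Lambda_const:
  assumes th0: "th0 \<in> S"
  shows "\<exists>c. \<forall>th\<in>S. th1 lo hi s1 < ereal th \<longrightarrow>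
           Lambda lo hi f d th0 (ttf lo hi s1 s2 th) = Lambda lo hi f d th0 th + c"
proof -
  define k where "k = ttf lo hi s1 s2"
  define phi where "phi x = Lambda lo hi f d th0 (k x) - Lambda lo hi f d th0 x" for x
  have "\<exists>c. \<forall>x\<in>J. phi x = c"
  proof (rule has_field_derivative_zero_constant[OF J_convex])
    fix x assume xJ: "x \<in> J"
    have xS: "x \<in> S" and xt: "th1 lo hi s1 < ereal x" using xJ by (auto simp: J_def)
    define y where "y = k x"
    have yS: "y \<in> S" using k_prop(1)[OF xJ] by (simp add: y_def k_def)
    have dk: "(k has_real_derivative ode_rhs lo hi f d x y) (at x)"
      using ode[OF xS xt] by (simp add: k_def y_def)
    have dL: "((\<lambda>u. Lambda lo hi f d th0 u) has_real_derivative lam y) (at (k x))"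
      using Lambda_deriv[OF th0 yS] by (simp add: y_def)
    have "(phi has_real_derivative (lam y * ode_rhs lo hi f d x y - lam x)) (at x)"
      unfolding phi_def[abs_def]
      by (intro DERIV_diff DERIV_chain2[OF dL dk] Lambda_deriv[OF th0 xS])
    moreover have "lam y * ode_rhs lo hi f d x y - lam x = 0"
    proof -
      have nz: "f y \<noteq> 0" "f x \<noteq> 0" "x \<noteq> 0" "y \<noteq> 0" "1 - d * F x \<noteq> 0" "1 - d * F y \<noteq> 0"
        using fpos yS xS S_pos[OF yS] S_pos[OF xS] omF'[of x] omF'[of y] by auto
      have aux: "\<And>fy fx x y A B :: real. fy \<noteq> 0 \<Longrightarrow> fx \<noteq> 0 \<Longrightarrow> x \<noteq> 0 \<Longrightarrow> y \<noteq> 0 \<Longrightarrow>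
          A \<noteq> 0 \<Longrightarrow> B \<noteq> 0 \<Longrightarrow> fy / (y * A) * (A / B * (y * fx) / (x * fy)) - fx / (x * B) = 0"
        by (simp add: field_simps)
      show ?thesis unfolding lam_def ode_rhs_def by (rule aux[OF nz(1-4) nz(6) nz(5)])
    qed
    ultimately show "(phi has_field_derivative 0) (at x within J)"
      by (simp add: has_field_derivative_at_within)
  qed
  then obtain c where c: "\<forall>x\<in>J. phi x = c" by blast
  show ?thesis
  proof (intro exI[of _ c] ballI impI)
    fix th assume "th \<in> S" "th1 lo hi s1 < ereal th"
    then have "th \<in> J" by (simp add: J_def)
    then show "Lambda lo hi f d th0 (ttf lo hi s1 s2 th) = Lambda lo hi f d th0 th + c"
      using c by (simp add: phi_def k_def algebra_simps)
  qed
qed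

end

lemma cle: "0 < (d::real) \<Longrightarrow> ennreal d * u \<le> ennreal d * v \<longleftrightarrow> u \<le> v"
  by (rule ennreal_mult_le_mult_iff) auto

lemma clt: "0 < (d::real) \<Longrightarrow> ennreal d * u < ennreal d * v \<longleftrightarrow> u < v"
  using cle[of d v u] by (simp add: not_le[symmetric])

lemma ceq: "0 < (d::real) \<Longrightarrow> ennreal d * u = ennreal d * v \<longleftrightarrow> u = v"
  using cle[of d u v] cle[of d v u] by (auto intro: antisym)

lemma c0: "0 < (d::real) \<Longrightarrow> ennreal d * u = 0 \<longleftrightarrow> u = 0"
  using ceq[of d u 0] by simp

lemma ctop: "0 < (d::real) \<Longrightarrow> ennreal d * u = \<infinity> \<longleftrightarrow> u = \<infinity>"
  by (simp add: ennreal_mult_eq_top_iff)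

lemma cmin: "0 < (d::real) \<Longrightarrow> min (ennreal d * u) (ennreal d * v) = ennreal d * min u v"
  using cle[of d u v] by (cases "u \<le> v") (auto simp: min_def)

lemma cinv: "0 < (d::real) \<Longrightarrow> ennreal d * (ennreal (1 / d) * u) = u"
proof -
  assume d: "0 < d"
  have "ennreal d * (ennreal (1 / d) * u) = (ennreal d * ennreal (1 / d)) * u"
    by (simp add: mult.assoc)
  also have "ennreal d * ennreal (1 / d) = ennreal (d * (1 / d))"
    using d by (intro ennreal_mult[symmetric]) auto
  also have "d * (1 / d) = 1" using d by simp
  finally show ?thesis by simp
qed

context setting begin

lemma EU_scale:
  assumes d: "0 < d" "d < 1" and s[measurable]: "s \<in> borel_measurable borel"
  shows "EU_BT lo hi f (1 - d) (\<lambda>x. ennreal d * s x) th (ennreal d * a) = ereal d * EU_AL lo hi f d s th a"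
proof -
  have set1: "{x. ennreal d * s x < ennreal d * a} = {x. s x < a}" using clt[OF d(1)] by simp
  have set2: "{x. ennreal d * s x = ennreal d * a} = {x. s x = a}" using ceq[OF d(1)] by simp
  define I where "I = (\<integral>\<^sup>+ x. min a (s x) \<partial>M)"
  have intB: "(\<integral>\<^sup>+ x. min (ennreal d * a) (ennreal d * s x) \<partial>M) = ennreal d * I"
    unfolding I_def cmin[OF d(1)] by (rule nn_integral_cmult) measurable
  have intA: "(\<integral>\<^sup>+ x. (ennreal d * min a (s x) + ennreal (1 - d) * a) \<partial>M) = ennreal d * I + ennreal (1 - d) * a"
  proof -
    have "(\<integral>\<^sup>+ x. (ennreal d * min a (s x) + ennreal (1 - d) * a) \<partial>M)
        = (\<integral>\<^sup>+ x. ennreal d * min a (s x) \<partial>M) + (\<integral>\<^sup>+ x. ennreal (1 - d) * a \<partial>M)"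
      by (rule nn_integral_add) measurable
    also have "\<dots> = ennreal d * I + ennreal (1 - d) * a"
      unfolding I_def using P.emeasure_space_1
      by (subst nn_integral_cmult) (auto simp: nn_integral_const)
    finally show ?thesis .
  qed
  define X where "X = th * measure M {x. s x < a} + th / 2 * measure M {x. s x = a}"
  have BT: "EU_BT lo hi f (1 - d) (\<lambda>x. ennreal d * s x) th (ennreal d * a) =
      ereal ((1 - (1 - d)) * X + (if ennreal d * a = \<infinity> then (1 - d) * (th / 2) else 0))
      - enn2ereal (ennreal (1 - (1 - d)) * (ennreal d * I) + ennreal (1 - d) * (ennreal d * a))"
    unfolding EU_BT_def X_def by (simp only: set1 set2 intB)
  have AL: "EU_AL lo hi f d s th a = ereal X - enn2ereal (ennreal d * I + ennreal (1 - d) * a)"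
    unfolding EU_AL_def intA X_def ..
  have dd: "1 - (1 - d) = d" by simp
  show ?thesis
  proof (cases "a = \<infinity>")
    case True
    have "ennreal (1 - d) * \<infinity> = \<infinity>" using d by (simp add: ennreal_mult_top)
    then have t1: "ennreal (1 - (1 - d)) * (ennreal d * I) + ennreal (1 - d) * (ennreal d * a) = \<infinity>"
      using True d by (simp add: ennreal_mult_top)
    have t2: "ennreal d * I + ennreal (1 - d) * a = \<infinity>"
      using True \<open>ennreal (1 - d) * \<infinity> = \<infinity>\<close> by simp
    show ?thesis unfolding BT AL t1 t2 using d by simp
  next
    case False
    then obtain r where r: "a = ennreal r" "0 \<le> r" by (cases a) auto
    have "I \<le> (\<integral>\<^sup>+ x. a \<partial>M)" unfolding I_def by (intro nn_integral_mono) auto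
    also have "\<dots> = a" using P.emeasure_space_1 by (simp add: nn_integral_const)
    finally have "I \<le> a" .
    then obtain i where i: "I = ennreal i" "0 \<le> i" using r
      by (metis ennreal_cases ennreal_le_iff le_ennreal_iff top_neq_ennreal)
    have e1: "ennreal (1 - (1 - d)) * (ennreal d * I) + ennreal (1 - d) * (ennreal d * a) = ennreal (d * (d * i) + (1 - d) * (d * r))"
      using d r i by (simp add: ennreal_mult[symmetric] ennreal_plus[symmetric] del: ennreal_plus)
    have e2: "ennreal d * I + ennreal (1 - d) * a = ennreal (d * i + (1 - d) * r)"
      using d r i by (simp add: ennreal_mult[symmetric] ennreal_plus[symmetric] del: ennreal_plus)
    have ca: "(ennreal d * a = \<infinity>) = False" using ctop[OF d(1)] False by simp
    have nn1: "0 \<le> d * (d * i) + (1 - d) * (d * r)" and nn2: "0 \<le> d * i + (1 - d) * r"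
      using d r i by auto
    show ?thesis unfolding BT AL e1 e2 ca using nn1 nn2
      by (simp add: algebra_simps)
  qed
qed

end

lemma cinv2: "0 < (d::real) \<Longrightarrow> ennreal (1 / d) * (ennreal d * u) = u"
  using cinv[of d u] by (simp add: mult.left_commute)

context setting begin

lemma BR_scale:
  assumes d: "0 < d" "d < 1" and s: "s' \<in> borel_measurable borel"
  shows "(\<forall>a. EU_BT lo hi f (1 - d) (\<lambda>x. ennreal d * s' x) th a \<le> EU_BT lo hi f (1 - d) (\<lambda>x. ennreal d * s' x) th (ennreal d * b))
     \<longleftrightarrow> (\<forall>a. EU_AL lo hi f d s' th a \<le> EU_AL lo hi f d s' th b)"
proof
  assume A: "\<forall>a. EU_BT lo hi f (1 - d) (\<lambda>x. ennreal d * s' x) th a \<le> EU_BT lo hi f (1 - d) (\<lambda>x. ennreal d * s' x) th (ennreal d * b)"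
  show "\<forall>a. EU_AL lo hi f d s' th a \<le> EU_AL lo hi f d s' th b"
  proof
    fix a
    have "ereal d * EU_AL lo hi f d s' th a \<le> ereal d * EU_AL lo hi f d s' th b"
      using A[rule_format, of "ennreal d * a"] EU_scale[OF d s] by simp
    then show "EU_AL lo hi f d s' th a \<le> EU_AL lo hi f d s' th b"
      using d by (simp add: ereal_mult_le_mult_iff)
  qed
next
  assume A: "\<forall>a. EU_AL lo hi f d s' th a \<le> EU_AL lo hi f d s' th b"
  show "\<forall>a. EU_BT lo hi f (1 - d) (\<lambda>x. ennreal d * s' x) th a \<le> EU_BT lo hi f (1 - d) (\<lambda>x. ennreal d * s' x) th (ennreal d * b)"
  proof
    fix a
    define a' where "a' = ennreal (1 / d) * a"
    have aa: "a = ennreal d * a'" using cinv[OF d(1)] by (simp add: a'_def)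
    have "ereal d * EU_AL lo hi f d s' th a' \<le> ereal d * EU_AL lo hi f d s' th b"
      using A d by (intro ereal_mult_left_mono) auto
    then show "EU_BT lo hi f (1 - d) (\<lambda>x. ennreal d * s' x) th a \<le> EU_BT lo hi f (1 - d) (\<lambda>x. ennreal d * s' x) th (ennreal d * b)"
      unfolding aa EU_scale[OF d s] .
  qed
qed

lemma meas_scale:
  assumes d: "0 < d"
  shows "(\<lambda>x. ennreal d * s x) \<in> borel_measurable borel \<longleftrightarrow> s \<in> borel_measurable borel"
proof
  assume "(\<lambda>x. ennreal d * s x) \<in> borel_measurable borel"
  then have "(\<lambda>x. ennreal (1 / d) * (ennreal d * s x)) \<in> borel_measurable borel" by measurable
  then show "s \<in> borel_measurable borel" using cinv2[OF d] by simp
qed measurable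

lemma AL_BT_equiv:
  assumes d: "0 < d" "d < 1"
  shows "AL_eq lo hi f d s1 s2 \<longleftrightarrow> BT_eq lo hi f (1 - d) (\<lambda>x. ennreal d * s1 x) (\<lambda>x. ennreal d * s2 x)"
proof -
  have z: "{th. ennreal d * s2 th = 0} = {th. s2 th = 0}" using c0[OF d(1)] by simp
  show ?thesis
    unfolding AL_eq_def BT_eq_def is_eq_def meas_scale[OF d(1)] z
    using BR_scale[OF d, of s2] BR_scale[OF d, of s1] by blast
qed

lemma ttf_scale: assumes d: "0 < d" shows "ttf lo hi (\<lambda>x. ennreal d * s1 x) (\<lambda>x. ennreal d * s2 x) = ttf lo hi s1 s2"
proof -
  have eq: "\<And>th. {th' \<in> S. ennreal d * s1 th \<le> ennreal d * s2 th'} = {th' \<in> S. s1 th \<le> s2 th'}"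
    using cle[OF d] by blast
  show ?thesis unfolding ttf_def by (simp only: eq)
qed

lemma th1_scale: "0 < d \<Longrightarrow> th1 lo hi (\<lambda>x. ennreal d * s1 x) = th1 lo hi s1"
  unfolding th1_def using c0[of d] by simp

lemma BT_to_AL:
  assumes d: "0 < d" "d < 1" and eq: "BT_eq lo hi f (1 - d) s1 s2"
  shows "AL_eq lo hi f d (\<lambda>x. ennreal (1 / d) * s1 x) (\<lambda>x. ennreal (1 / d) * s2 x)"
    and "ttf lo hi (\<lambda>x. ennreal (1 / d) * s1 x) (\<lambda>x. ennreal (1 / d) * s2 x) = ttf lo hi s1 s2"
    and "th1 lo hi (\<lambda>x. ennreal (1 / d) * s1 x) = th1 lo hi s1"
proof -
  have e1: "(\<lambda>x. ennreal d * (ennreal (1 / d) * s1 x)) = s1" using cinv[OF d(1)] by simp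
  have e2: "(\<lambda>x. ennreal d * (ennreal (1 / d) * s2 x)) = s2" using cinv[OF d(1)] by simp
  show "AL_eq lo hi f d (\<lambda>x. ennreal (1 / d) * s1 x) (\<lambda>x. ennreal (1 / d) * s2 x)"
    using AL_BT_equiv[OF d] eq e1 e2 by simp
  show "ttf lo hi (\<lambda>x. ennreal (1 / d) * s1 x) (\<lambda>x. ennreal (1 / d) * s2 x) = ttf lo hi s1 s2"
    using ttf_scale[OF d(1), of "\<lambda>x. ennreal (1 / d) * s1 x" "\<lambda>x. ennreal (1 / d) * s2 x"] e1 e2 by simp
  show "th1 lo hi (\<lambda>x. ennreal (1 / d) * s1 x) = th1 lo hi s1"
    using th1_scale[OF d(1), of "\<lambda>x. ennreal (1 / d) * s1 x"] e1 by simp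
qed

lemma E_eq:
  assumes d: "0 < d" "d < 1"
  shows "E_AL lo hi f d = E_BT lo hi f (1 - d)"
proof (intro set_eqI iffI)
  fix k assume "k \<in> E_AL lo hi f d"
  then obtain s1 s2 where k: "k = ttf lo hi s1 s2" and eq: "AL_eq lo hi f d s1 s2" by (auto simp: E_AL_def)
  have "BT_eq lo hi f (1 - d) (\<lambda>x. ennreal d * s1 x) (\<lambda>x. ennreal d * s2 x)" using eq AL_BT_equiv[OF d] by simp
  moreover have "k = ttf lo hi (\<lambda>x. ennreal d * s1 x) (\<lambda>x. ennreal d * s2 x)" using k ttf_scale[OF d(1)] by simp
  ultimately show "k \<in> E_BT lo hi f (1 - d)" by (auto simp: E_BT_def)
next
  fix k assume "k \<in> E_BT lo hi f (1 - d)"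
  then obtain s1 s2 where k: "k = ttf lo hi s1 s2" and eq: "BT_eq lo hi f (1 - d) s1 s2" by (auto simp: E_BT_def)
  have "k = ttf lo hi (\<lambda>x. ennreal (1 / d) * s1 x) (\<lambda>x. ennreal (1 / d) * s2 x)"
    using BT_to_AL(2)[OF d eq] k by simp
  then show "k \<in> E_AL lo hi f d" using BT_to_AL(1)[OF d eq] unfolding E_AL_def by blast
qed

lemma selections: "AL_selection lo hi f = BT_selection lo hi f"
proof (intro set_eqI iffI)
  fix k assume "k \<in> AL_selection lo hi f"
  then obtain d kn where A: "\<forall>n. 0 \<le> d n \<and> d n < 1 \<and> kn n \<in> E_AL lo hi f (d n)"
      and dl: "d \<longlonglongrightarrow> 1" and u: "ucc S kn k" by (auto simp: AL_selection_def)
  have "eventually (\<lambda>n. 0 < d n) sequentially" using dl by (rule order_tendstoD(1)) simp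
  then obtain N where N: "\<And>n. n \<ge> N \<Longrightarrow> 0 < d n" by (auto simp: eventually_sequentially)
  define e where "e n = 1 - d (n + N)" for n
  define kn' where "kn' n = kn (n + N)" for n
  have "\<forall>n. 0 < e n \<and> e n < 1 \<and> kn' n \<in> E_BT lo hi f (e n)"
  proof
    fix n
    have dp: "0 < d (n + N)" "d (n + N) < 1" using N[of "n + N"] A by auto
    then show "0 < e n \<and> e n < 1 \<and> kn' n \<in> E_BT lo hi f (e n)"
      using A E_eq[OF dp] by (auto simp: e_def kn'_def)
  qed
  moreover have "e \<longlonglongrightarrow> 0"
  proof -
    have "(\<lambda>n. d (n + N)) \<longlonglongrightarrow> 1" using LIMSEQ_ignore_initial_segment[OF dl] .
    then have "(\<lambda>n. 1 - d (n + N)) \<longlonglongrightarrow> 1 - 1" by (intro tendsto_intros)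
    then show ?thesis by (simp add: e_def[abs_def])
  qed
  moreover have "ucc S kn' k"
    unfolding ucc_def
  proof (intro allI impI)
    fix K assume "compact K \<and> K \<subseteq> S"
    then have "uniform_limit K kn k sequentially" using u by (auto simp: ucc_def)
    then have "filterlim (\<lambda>n. kn (n + N)) (uniformly_on K k) sequentially"
      by (rule filterlim_compose) (rule filterlim_add_const_nat_at_top)
    then show "uniform_limit K kn' k sequentially" by (simp add: kn'_def[abs_def])
  qed
  ultimately show "k \<in> BT_selection lo hi f" by (auto simp: BT_selection_def)
next
  fix k assume "k \<in> BT_selection lo hi f"
  then obtain e kn where A: "\<forall>n. 0 < e n \<and> e n < 1 \<and> kn n \<in> E_BT lo hi f (e n)"
      and el: "e \<longlonglongrightarrow> 0" and u: "ucc S kn k" by (auto simp: BT_selection_def)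
  define d where "d n = 1 - e n" for n
  have "\<forall>n. 0 \<le> d n \<and> d n < 1 \<and> kn n \<in> E_AL lo hi f (d n)"
  proof
    fix n
    have dp: "0 < d n" "d n < 1" using A by (auto simp: d_def)
    have "E_AL lo hi f (d n) = E_BT lo hi f (e n)" using E_eq[OF dp] by (simp add: d_def)
    then show "0 \<le> d n \<and> d n < 1 \<and> kn n \<in> E_AL lo hi f (d n)" using A dp by auto
  qed
  moreover have "d \<longlonglongrightarrow> 1"
  proof -
    have "(\<lambda>n. 1 - e n) \<longlonglongrightarrow> 1 - 0" using el by (intro tendsto_intros)
    then show ?thesis by (simp add: d_def[abs_def])
  qed
  ultimately show "k \<in> AL_selection lo hi f" using u by (auto simp: AL_selection_def)
qed

end



theorem proposition2:
  fixes lo :: real and hi :: ereal and f :: "real \<Rightarrow> real"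
  assumes "0 \<le> lo" and "ereal lo < hi"
    and "continuous_on (supp lo hi) f"
    and "\<forall>x\<in>supp lo hi. 0 < f x"
    and "prob_space (distF lo hi f)"
  shows
    \<comment> \<open>(i) ODE in the behavioural-types game (with d = 1 - e), the same ODE in the AL game,
        and the associated perturbed hazard potential\<close>
    "(\<forall>e s1 s2. 0 < e \<and> e < 1 \<and> BT_eq lo hi f e s1 s2 \<longrightarrow>
        (\<forall>th\<in>supp lo hi. th1 lo hi s1 < ereal th \<longrightarrow>
           (ttf lo hi s1 s2 has_real_derivative
              ode_rhs lo hi f (1 - e) th (ttf lo hi s1 s2 th)) (at th)) \<and>
        (\<forall>th0\<in>supp lo hi. \<exists>c. \<forall>th\<in>supp lo hi. th1 lo hi s1 < ereal th \<longrightarrow>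
           Lambda lo hi f (1 - e) th0 (ttf lo hi s1 s2 th) = Lambda lo hi f (1 - e) th0 th + c))
     \<and> (\<forall>d s1 s2. 0 < d \<and> d < 1 \<and> AL_eq lo hi f d s1 s2 \<longrightarrow>
        (\<forall>th\<in>supp lo hi. th1 lo hi s1 < ereal th \<longrightarrow>
           (ttf lo hi s1 s2 has_real_derivative
              ode_rhs lo hi f d th (ttf lo hi s1 s2 th)) (at th)))
     \<comment> \<open>(ii)\<close>
     \<and> (\<forall>d. 0 < d \<and> d < 1 \<longrightarrow> E_AL lo hi f d = E_BT lo hi f (1 - d))
     \<comment> \<open>(iii)\<close>
     \<and> AL_selection lo hi f = BT_selection lo hi f"
proof -
  interpret setting lo hi f unfolding setting_def using assms by auto
  have P1: "\<forall>e s1 s2. 0 < e \<and> e < 1 \<and> BT_eq lo hi f e s1 s2 \<longrightarrow>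
        (\<forall>th\<in>supp lo hi. th1 lo hi s1 < ereal th \<longrightarrow>
           (ttf lo hi s1 s2 has_real_derivative
              ode_rhs lo hi f (1 - e) th (ttf lo hi s1 s2 th)) (at th)) \<and>
        (\<forall>th0\<in>supp lo hi. \<exists>c. \<forall>th\<in>supp lo hi. th1 lo hi s1 < ereal th \<longrightarrow>
           Lambda lo hi f (1 - e) th0 (ttf lo hi s1 s2 th) = Lambda lo hi f (1 - e) th0 th + c)"
  proof (intro allI impI)
    fix e s1 s2 assume A: "0 < e \<and> e < 1 \<and> BT_eq lo hi f e s1 s2"
    define d where "d = 1 - e"
    have d: "0 < d" "d < 1" and ed: "e = 1 - d" using A by (auto simp: d_def)
    have eq: "BT_eq lo hi f (1 - d) s1 s2" using A ed by simp
    note B = BT_to_AL[OF d eq]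
    interpret AQ: aleq lo hi f d "\<lambda>x. ennreal (1 / d) * s1 x" "\<lambda>x. ennreal (1 / d) * s2 x"
      using d B(1) by unfold_locales auto
    show "(\<forall>th\<in>supp lo hi. th1 lo hi s1 < ereal th \<longrightarrow>
           (ttf lo hi s1 s2 has_real_derivative
              ode_rhs lo hi f (1 - e) th (ttf lo hi s1 s2 th)) (at th)) \<and>
        (\<forall>th0\<in>supp lo hi. \<exists>c. \<forall>th\<in>supp lo hi. th1 lo hi s1 < ereal th \<longrightarrow>
           Lambda lo hi f (1 - e) th0 (ttf lo hi s1 s2 th) = Lambda lo hi f (1 - e) th0 th + c)"
      using AQ.ode AQ.Lambda_const B(2,3) by (simp add: d_def)
  qed
  have P2: "\<forall>d s1 s2. 0 < d \<and> d < 1 \<and> AL_eq lo hi f d s1 s2 \<longrightarrow>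
        (\<forall>th\<in>supp lo hi. th1 lo hi s1 < ereal th \<longrightarrow>
           (ttf lo hi s1 s2 has_real_derivative
              ode_rhs lo hi f d th (ttf lo hi s1 s2 th)) (at th))"
  proof (intro allI impI)
    fix d s1 s2 assume A: "0 < d \<and> d < 1 \<and> AL_eq lo hi f d s1 s2"
    interpret AQ: aleq lo hi f d s1 s2 using A by unfold_locales auto
    show "\<forall>th\<in>supp lo hi. th1 lo hi s1 < ereal th \<longrightarrow>
           (ttf lo hi s1 s2 has_real_derivative ode_rhs lo hi f d th (ttf lo hi s1 s2 th)) (at th)"
      using AQ.ode by blast
  qed
  show ?thesis using P1 P2 E_eq selections by blast
qed

end
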